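(* Consider the single-item sale in an economic network described in the context, and the mechanism IDM-TC defined there. If the economic network forms a tree, then IDM-TC is efficient, individually rational, incentive compatible and weakly budget balanced. Moreover, for every feasible type report profile, the seller's revenue under IDM-TC is at least the revenue of the Vickrey (second-price) auction run among the seller's direct neighbours, i.e. at least the second highest bid among the buyers in $r_s$.
   Context: Setting. A seller $s$ sells one indivisible commodity. Besides $s$, there is a set $N=\{1,\dots,n\}$ of agents, each either a buyer or an intermediate node. Each buyer $i$ has a private value $b_i\ge 0$ for the commodity. Each intermediate node $i$ has a private neighbour set $r_i\subseteq N$ (the agents with whom she can directly exchange the sale information) and a publicly known cost $c_i$ incurred if a trade passes through her. Buyers have no links among themselves. Initially only the seller's neighbours $r_s\subseteq N$ know of the sale. The type of buyer $i$ is $t_i=b_i$ and of intermediate node $i$ is $t_i=r_i$. A buyer reports a bid $t'_i=b'_i\ge 0$; an intermediate node reports $t'_i=r'_i\subseteq r_i$, meaning she passes the sale information to exactly $r'_i$; $t'_i=nil$ if $i$ is uninformed or does not participate. A trading chain from $s$ to $i$ under reports $t'$ is a simple path $(a_1,\dots,a_p,i)$ with $a_1\in r_s$, $a_l\in r'_{a_{l-1}}$ for $1<l\le p$, and $i\in r'_{a_p}$. A report profile $t'$ is feasible if for every $i$, $t'_i\ne nil$ iff there is a trading chain from $s$ to $i$ following the reports $t'_{-i}$; only feasible profiles are considered (when an agent changes her report, the others' profile adjusts so as to remain feasible). For an informed agent $i$, $LCC_i$ is a trading chain from $s$ to $i$ minimizing the total cost of the intermediate nodes on it other than $i$. For a buyer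 $i$, $SW_i=b'_i-\sum_{j\in LCC_i\setminus\{i\}}c_j$. Mechanisms and properties. A mechanism $(\pi,x)$ assigns to each feasible $t'$ an allocation $\pi_i(t')\in\{-1,0,1\}$ ($1$: $i$ is the winner; $-1$: $i$ lies on the selected trading chain to the winner; $0$: otherwise), with at most one winner and the agents with $\pi_i\neq 0$ forming a trading chain from $s$ to the winner, and payments $x_i(t')\in\mathbb R$ (paid by $i$ to the seller; negative means $i$ receives money). Agent $i$'s value is $v_i=b_i$ if $\pi_i=1$, $v_i=-c_i$ if $\pi_i=-1$, $v_i=0$ otherwise; her utility is $v_i-x_i(t')$. The social welfare is $\sum_i v_i$ (computed with reported types). An allocation is efficient if it maximizes social welfare for every feasible $t'$; equivalently it gives the item to $m=\arg\max_{i}SW_i$ along $LCC_m$. $W^*(t')$ is the maximum social welfare under $t'$; for a set $X$ of agents, $W^*_{-X}$ is the maximum social welfare under the profile $t'_{-X}$ in which the agents of $X$ do not participate. Individual rationality (IR): every buyer has nonnegative utility when bidding truthfully, and every intermediate node has nonnegative utility for every report $r'_i\subseteq r_i$ and whatever the others do. Incentive compatibility (IC): for every agent, reporting her true type ($b'_i=b_i$, resp. $r'_i=r_i$, i.e. sharing with all neighbours) maximizes her utility regardless of the others' reports. Weakly budget balanced: the revenue $\sum_{i\in N}x_i(t')$ is $\ge 0$ for every feasible $t'$. Diffusion critical agents. Agent $i$ is a diffusion critical agent of $j$ if every trading chain from $s$ to $j$ passes through $i$ (in particular $i$ is one of $j$'s). $d_i$ is the set of agents having $i$ as a diffusion critical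 agent. The diffusion critical sequence $C_j$ of $j$ is the set of all diffusion critical agents of $j$, ordered $s_1,\dots,s_k,j$ so that $d_{s_1}\supset d_{s_2}\supset\dots\supset d_{s_k}\supset d_j$. IDM-TC. Given feasible $t'$: allocate the item to $m=\arg\max_{i}SW_i$ (random tie-breaking) along $LCC_m$. Write $C_m=\{1,2,\dots,m\}$ in its order, and for $i\in C_m\setminus\{m\}$ let $i+1$ be its successor in $C_m$. Payments: $x_i=W^*_{-d_i}-W^*_{-d_{i+1}}-c_i$ if $i\in C_m\setminus\{m\}$; $x_i=-c_i$ if $i\in LCC_m\setminus C_m$; $x_m=W^*_{-m}+\sum_{j\in LCC_m\setminus\{m\}}c_j$; $x_i=0$ otherwise. The economic network forms a tree means that the undirected graph on $\{s\}\cup N$ whose edges join each of $s$ and the intermediate nodes to their neighbours is a tree. *)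

theory Defs
  imports Complex_Main "HOL-Library.Multiset"
begin

text \<open>A report of an informed agent: a buyer reports a bid, an intermediate node reports
  the set of neighbours she passes the sale information to. \<open>None\<close> is nil.\<close>
datatype 'a report = Bid real | Share "'a set"

type_synonym 'a profile = "'a \<Rightarrow> 'a report option"

record 'a market =
  seller :: 'a
  agents :: "'a set"
  buyers :: "'a set"
  seller_nbrs :: "'a set"
  cost :: "'a \<Rightarrow> real"

definition intermediates :: "'a market \<Rightarrow> 'a set" where
  "intermediates E = agents E - buyers E"

definition bid_of :: "'a profile \<Rightarrow> 'a \<Rightarrow> real" where
  "bid_of t j = (case t j of Some (Bid x) \<Rightarrow> x | _ \<Rightarrow> 0)"

definition shared :: "'a profile \<Rightarrow> 'a \<Rightarrow> 'a set" where
  "shared t i = (case t i of Some (Share R) \<Rightarrow> R | _ \<Rightarrow> {})"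

text \<open>\<open>trading_chain E t i xs\<close>: \<open>xs = [a_1,...,a_p]\<close> and \<open>(a_1,...,a_p,i)\<close> is a trading
  chain from the seller to i following the reports t (of the agents other than i).\<close>
definition trading_chain :: "'a market \<Rightarrow> 'a profile \<Rightarrow> 'a \<Rightarrow> 'a list \<Rightarrow> bool" where
  "trading_chain E t i xs \<longleftrightarrow>
     distinct (xs @ [i]) \<and> set xs \<subseteq> intermediates E \<and>
     hd (xs @ [i]) \<in> seller_nbrs E \<and>
     (\<forall>k < length xs. (xs @ [i]) ! Suc k \<in> shared t (xs ! k))"

definition chain_cost :: "'a market \<Rightarrow> 'a list \<Rightarrow> real" where
  "chain_cost E xs = (\<Sum>j\<leftarrow>xs. cost E j)"

definition valid_report :: "'a market \<Rightarrow> ('a \<Rightarrow> 'a set) \<Rightarrow> 'a \<Rightarrow> 'a report \<Rightarrow> bool" where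
  "valid_report E r i x \<longleftrightarrow>
     (i \<in> buyers E \<and> (\<exists>v. 0 \<le> v \<and> x = Bid v)) \<or>
     (i \<in> intermediates E \<and> (\<exists>R. R \<subseteq> r i \<and> x = Share R))"

definition feasible :: "'a market \<Rightarrow> ('a \<Rightarrow> 'a set) \<Rightarrow> 'a profile \<Rightarrow> bool" where
  "feasible E r t \<longleftrightarrow>
     (\<forall>i. t i \<noteq> None \<longrightarrow> i \<in> agents E \<and> valid_report E r i (the (t i))) \<and>
     (\<forall>i \<in> agents E. t i \<noteq> None \<longleftrightarrow> (\<exists>xs. trading_chain E t i xs))"

text \<open>Truthful report, and the feasible profile produced by intended reports \<open>\<rho>\<close>
  (only the agents reached by the sale information report).\<close>
definition truthful :: "'a market \<Rightarrow> ('a \<Rightarrow> real) \<Rightarrow> ('a \<Rightarrow> 'a set) \<Rightarrow> 'a \<Rightarrow> 'a report" where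
  "truthful E b r i = (if i \<in> buyers E then Bid (b i) else Share (r i))"

definition realize :: "'a market \<Rightarrow> ('a \<Rightarrow> 'a report) \<Rightarrow> 'a profile" where
  "realize E \<rho> = (\<lambda>j. if j \<in> agents E \<and> (\<exists>xs. trading_chain E (Some \<circ> \<rho>) j xs)
                       then Some (\<rho> j) else None)"

definition lcc :: "'a market \<Rightarrow> 'a profile \<Rightarrow> 'a \<Rightarrow> 'a list" where
  "lcc E t i = (SOME xs. trading_chain E t i xs \<and>
                 (\<forall>ys. trading_chain E t i ys \<longrightarrow> chain_cost E xs \<le> chain_cost E ys))"

definition SW :: "'a market \<Rightarrow> 'a profile \<Rightarrow> 'a \<Rightarrow> real" where
  "SW E t i = bid_of t i - chain_cost E (lcc E t i)"

text \<open>Maximum social welfare: over all allocations (no sale, or a sale to an informed buyer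
  along a trading chain).\<close>
definition Wstar :: "'a market \<Rightarrow> 'a profile \<Rightarrow> real" where
  "Wstar E t = Max (insert 0 {bid_of t j - chain_cost E xs | j xs.
                     j \<in> buyers E \<and> t j \<noteq> None \<and> trading_chain E t j xs})"

definition without :: "'a profile \<Rightarrow> 'a set \<Rightarrow> 'a profile" where
  "without t X = (\<lambda>j. if j \<in> X then None else t j)"

definition critical :: "'a market \<Rightarrow> 'a profile \<Rightarrow> 'a \<Rightarrow> 'a \<Rightarrow> bool" where
  "critical E t i j \<longleftrightarrow> (\<forall>xs. trading_chain E t j xs \<longrightarrow> i \<in> set xs \<or> i = j)"

definition dset :: "'a market \<Rightarrow> 'a profile \<Rightarrow> 'a \<Rightarrow> 'a set" where
  "dset E t i = {j. t j \<noteq> None \<and> critical E t i j}"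

definition crit_seq :: "'a market \<Rightarrow> 'a profile \<Rightarrow> 'a \<Rightarrow> 'a set" where
  "crit_seq E t j = {i. t i \<noteq> None \<and> critical E t i j}"

text \<open>Successor of i in the diffusion critical sequence of m (ordered by inclusion of d).\<close>
definition crit_succ :: "'a market \<Rightarrow> 'a profile \<Rightarrow> 'a \<Rightarrow> 'a \<Rightarrow> 'a" where
  "crit_succ E t m i = (THE k. k \<in> crit_seq E t m \<and> dset E t k \<subset> dset E t i \<and>
      (\<forall>l \<in> crit_seq E t m. dset E t l \<subset> dset E t i \<longrightarrow> dset E t l \<subseteq> dset E t k))"

definition informed_buyers :: "'a market \<Rightarrow> 'a profile \<Rightarrow> 'a set" where
  "informed_buyers E t = {j \<in> buyers E. t j \<noteq> None}"

text \<open>Possible winners (random tie-breaking among them); no sale if no informed buyer has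
  nonnegative SW.\<close>
definition winners :: "'a market \<Rightarrow> 'a profile \<Rightarrow> 'a set" where
  "winners E t = {m \<in> informed_buyers E t. 0 \<le> SW E t m \<and>
                    (\<forall>j \<in> informed_buyers E t. SW E t j \<le> SW E t m)}"

text \<open>Possible outcomes: \<open>Some m\<close> = item sold to m along \<open>lcc E t m\<close>; \<open>None\<close> = no sale.
  Each outcome is realized with equal probability.\<close>
definition outcomes :: "'a market \<Rightarrow> 'a profile \<Rightarrow> 'a option set" where
  "outcomes E t = (if winners E t = {} then {None} else Some ` winners E t)"

definition alloc :: "'a market \<Rightarrow> 'a profile \<Rightarrow> 'a option \<Rightarrow> 'a \<Rightarrow> int" where
  "alloc E t w i = (case w of None \<Rightarrow> 0
     | Some m \<Rightarrow> if i = m then 1 else if i \<in> set (lcc E t m) then -1 else 0)"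

definition payment :: "'a market \<Rightarrow> 'a profile \<Rightarrow> 'a option \<Rightarrow> 'a \<Rightarrow> real" where
  "payment E t w i = (case w of None \<Rightarrow> 0
     | Some m \<Rightarrow>
        if i = m then Wstar E (without t {m}) + chain_cost E (lcc E t m)
        else if i \<in> crit_seq E t m then
          Wstar E (without t (dset E t i)) - Wstar E (without t (dset E t (crit_succ E t m i)))
          - cost E i
        else if i \<in> set (lcc E t m) then - cost E i
        else 0)"

definition reported_value :: "'a market \<Rightarrow> 'a profile \<Rightarrow> 'a option \<Rightarrow> 'a \<Rightarrow> real" where
  "reported_value E t w i = (if alloc E t w i = 1 then bid_of t i
     else if alloc E t w i = -1 then - cost E i else 0)"

definition true_value :: "'a market \<Rightarrow> ('a \<Rightarrow> real) \<Rightarrow> 'a profile \<Rightarrow> 'a option \<Rightarrow> 'a \<Rightarrow> real" where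
  "true_value E b t w i = (if alloc E t w i = 1 then b i
     else if alloc E t w i = -1 then - cost E i else 0)"

definition social_welfare :: "'a market \<Rightarrow> 'a profile \<Rightarrow> 'a option \<Rightarrow> real" where
  "social_welfare E t w = (\<Sum>i\<in>agents E. reported_value E t w i)"

definition utility :: "'a market \<Rightarrow> ('a \<Rightarrow> real) \<Rightarrow> 'a profile \<Rightarrow> 'a option \<Rightarrow> 'a \<Rightarrow> real" where
  "utility E b t w i = true_value E b t w i - payment E t w i"

definition expected_utility :: "'a market \<Rightarrow> ('a \<Rightarrow> real) \<Rightarrow> 'a profile \<Rightarrow> 'a \<Rightarrow> real" where
  "expected_utility E b t i =
     (\<Sum>w\<in>outcomes E t. utility E b t w i) / real (card (outcomes E t))"

definition revenue :: "'a market \<Rightarrow> 'a profile \<Rightarrow> 'a option \<Rightarrow> real" where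
  "revenue E t w = (\<Sum>i\<in>agents E. payment E t w i)"

text \<open>Revenue of the Vickrey auction among the seller's neighbours: the second highest bid
  of the buyers in r_s (0 if there are fewer than two of them).\<close>
definition vickrey_revenue :: "'a market \<Rightarrow> 'a profile \<Rightarrow> real" where
  "vickrey_revenue E t =
     (let A = buyers E \<inter> seller_nbrs E;
          L = sorted_list_of_multiset (image_mset (bid_of t) (mset_set A))
      in if card A < 2 then 0 else L ! (card A - 2))"

definition efficient :: "'a market \<Rightarrow> ('a \<Rightarrow> 'a set) \<Rightarrow> bool" where
  "efficient E r \<longleftrightarrow>
     (\<forall>t. feasible E r t \<longrightarrow> (\<forall>w\<in>outcomes E t. social_welfare E t w = Wstar E t))"

definition individually_rational :: "'a market \<Rightarrow> ('a \<Rightarrow> real) \<Rightarrow> ('a \<Rightarrow> 'a set) \<Rightarrow> bool" where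
  "individually_rational E b r \<longleftrightarrow>
     (\<forall>t. feasible E r t \<longrightarrow>
        (\<forall>i\<in>buyers E. t i = Some (Bid (b i)) \<longrightarrow>
            (\<forall>w\<in>outcomes E t. 0 \<le> utility E b t w i)) \<and>
        (\<forall>i\<in>intermediates E. \<forall>w\<in>outcomes E t. 0 \<le> utility E b t w i))"

definition incentive_compatible :: "'a market \<Rightarrow> ('a \<Rightarrow> real) \<Rightarrow> ('a \<Rightarrow> 'a set) \<Rightarrow> bool" where
  "incentive_compatible E b r \<longleftrightarrow>
     (\<forall>\<rho>. (\<forall>j\<in>agents E. valid_report E r j (\<rho> j)) \<longrightarrow>
        (\<forall>i\<in>agents E. \<forall>x. valid_report E r i x \<longrightarrow>
            expected_utility E b (realize E (\<rho>(i := x))) i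
              \<le> expected_utility E b (realize E (\<rho>(i := truthful E b r i))) i))"

definition weakly_budget_balanced :: "'a market \<Rightarrow> ('a \<Rightarrow> 'a set) \<Rightarrow> bool" where
  "weakly_budget_balanced E r \<longleftrightarrow>
     (\<forall>t. feasible E r t \<longrightarrow> (\<forall>w\<in>outcomes E t. 0 \<le> revenue E t w))"

definition net_vertices :: "'a market \<Rightarrow> 'a set" where
  "net_vertices E = insert (seller E) (agents E)"

definition net_edges :: "'a market \<Rightarrow> ('a \<Rightarrow> 'a set) \<Rightarrow> 'a set set" where
  "net_edges E r = {{seller E, j} | j. j \<in> seller_nbrs E} \<union>
                   {{i, j} | i j. i \<in> intermediates E \<and> j \<in> r i}"

definition is_tree :: "'a set \<Rightarrow> 'a set set \<Rightarrow> bool" where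
  "is_tree V Ed \<longleftrightarrow>
     (\<forall>e\<in>Ed. \<exists>u v. u \<noteq> v \<and> u \<in> V \<and> v \<in> V \<and> e = {u, v}) \<and>
     (\<forall>u\<in>V. \<forall>v\<in>V. \<exists>p. p \<noteq> [] \<and> hd p = u \<and> last p = v \<and>
                        (\<forall>k < length p - 1. {p ! k, p ! Suc k} \<in> Ed)) \<and>
     \<not> (\<exists>p. 3 \<le> length p \<and> distinct p \<and>
              (\<forall>k < length p - 1. {p ! k, p ! Suc k} \<in> Ed) \<and> {last p, hd p} \<in> Ed)"

end

theory Submission
  imports Defs
begin


lemma walk_idx_conv:
  "(\<forall>k < length p - 1. {p ! k, p ! Suc k} \<in> Ed) \<longleftrightarrow> successively (\<lambda>x y. {x, y} \<in> Ed) p"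
  unfolding successively_conv_nth by (metis less_diff_conv Suc_eq_plus1)

lemma succ_tl: "successively P (x # xs) \<Longrightarrow> successively P xs"
  by (cases xs) auto

lemma walk_unique:
  fixes Ed :: "'a set set"
  assumes nocyc: "\<not> (\<exists>p. 3 \<le> length p \<and> distinct p \<and>
              successively (\<lambda>x y. {x, y} \<in> Ed) p \<and> {last p, hd p} \<in> Ed)"
  shows "distinct p \<Longrightarrow> distinct q \<Longrightarrow> successively (\<lambda>x y. {x, y} \<in> Ed) p \<Longrightarrow>
     successively (\<lambda>x y. {x, y} \<in> Ed) q \<Longrightarrow> p \<noteq> [] \<Longrightarrow> q \<noteq> [] \<Longrightarrow>
     hd p = hd q \<Longrightarrow> last p = last q \<Longrightarrow> p = q"
proof (induction p arbitrary: q)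
  case Nil then show ?case by simp
next
  case (Cons a p1)
  obtain q1 where q: "q = a # q1" using Cons.prems by (cases q) auto
  show ?case
  proof (cases "p1 = [] \<or> q1 = []")
    case True
    then show ?thesis
    proof
      assume "p1 = []"
      have "q1 = []"
      proof (rule ccontr)
        assume "q1 \<noteq> []"
        then have "last q1 = a" using Cons.prems q \<open>p1 = []\<close> by simp
        then have "a \<in> set q1" using \<open>q1 \<noteq> []\<close> last_in_set by metis
        then show False using Cons.prems(2) q by simp
      qed
      then show ?thesis using q \<open>p1 = []\<close> by simp
    next
      assume "q1 = []"
      have "p1 = []"
      proof (rule ccontr)
        assume "p1 \<noteq> []"
        then have "last p1 = a" using Cons.prems q \<open>q1 = []\<close> by simp
        then have "a \<in> set p1" using \<open>p1 \<noteq> []\<close> last_in_set by metis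
        then show False using Cons.prems(1) by simp
      qed
      then show ?thesis using q \<open>q1 = []\<close> by simp
    qed
  next
    case False
    then have ne: "p1 \<noteq> []" "q1 \<noteq> []" by auto
    show ?thesis
    proof (cases "hd p1 = hd q1")
      case True
      have "p1 = q1"
        apply (rule Cons.IH)
        using Cons.prems q ne True by (auto simp: successively_Cons)
      then show ?thesis using q by simp
    next
      case False
      have "last p1 = last q1" using ne Cons.prems q by simp
      then have "\<exists>x\<in>set p1. x \<in> set q1"
        using ne last_in_set by metis
      then obtain \<alpha> v \<beta> where p1: "p1 = \<alpha> @ v # \<beta>" and vq: "v \<in> set q1"
          and al: "\<forall>y\<in>set \<alpha>. y \<notin> set q1"
        using split_list_first_prop[of p1 "\<lambda>x. x \<in> set q1"] by blast
      obtain \<gamma> \<delta> where q1: "q1 = \<gamma> @ v # \<delta>" using vq by (meson split_list)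
      define C where "C = a # \<alpha> @ v # rev \<gamma>"
      have dp: "distinct (a # \<alpha> @ v # \<beta>)" using Cons.prems p1 by simp
      have dq: "distinct (a # \<gamma> @ v # \<delta>)" using Cons.prems q q1 by simp
      have "distinct C" unfolding C_def using dp dq al q1 by auto
      moreover have "3 \<le> length C"
      proof -
        have "\<alpha> \<noteq> [] \<or> \<gamma> \<noteq> []" using False p1 q1 by auto
        moreover have "length C = 2 + length \<alpha> + length \<gamma>" unfolding C_def by simp
        moreover have "0 < length \<alpha> + length \<gamma>" using \<open>\<alpha> \<noteq> [] \<or> \<gamma> \<noteq> []\<close> by auto
        ultimately show ?thesis by linarith
      qed
      moreover have "successively (\<lambda>x y. {x, y} \<in> Ed) C"
      proof -
        have sp: "successively (\<lambda>x y. {x, y} \<in> Ed) ((a # \<alpha> @ [v]) @ \<beta>)"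
        proof -
          have "a # p1 = (a # \<alpha> @ [v]) @ \<beta>" using p1 by simp
          then show ?thesis using Cons.prems(3) by metis
        qed
        have sq: "successively (\<lambda>x y. {x, y} \<in> Ed) (a # (\<gamma> @ [v]) @ \<delta>)"
        proof -
          have "q = a # (\<gamma> @ [v]) @ \<delta>" using q q1 by simp
          then show ?thesis using Cons.prems(4) by metis
        qed
        have s1: "successively (\<lambda>x y. {x, y} \<in> Ed) (a # \<alpha> @ [v])"
          using successively_append_iff[THEN iffD1, OF sp] by (rule conjunct1)
        have "successively (\<lambda>x y. {x, y} \<in> Ed) ((\<gamma> @ [v]) @ \<delta>)"
          using sq succ_tl by metis
        then have s2: "successively (\<lambda>x y. {x, y} \<in> Ed) (\<gamma> @ [v])"
          using successively_append_iff[THEN iffD1] by (metis (no_types, lifting))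
        have sym: "(\<lambda>x y. {y, x} \<in> Ed) = (\<lambda>x y. {x, y} \<in> Ed)"
          by (intro ext) (simp add: insert_commute)
        have "successively (\<lambda>x y. {x, y} \<in> Ed) (rev (\<gamma> @ [v]))"
          unfolding successively_rev sym using s2 .
        then have s2': "successively (\<lambda>x y. {x, y} \<in> Ed) (v # rev \<gamma>)" by simp
        have s3: "successively (\<lambda>x y. {x, y} \<in> Ed) (rev \<gamma>)" using s2' succ_tl by metis
        have e: "rev \<gamma> \<noteq> [] \<Longrightarrow> {v, hd (rev \<gamma>)} \<in> Ed" using s2' by (simp add: successively_Cons)
        have C': "C = (a # \<alpha> @ [v]) @ rev \<gamma>" unfolding C_def by simp
        have l: "last (a # \<alpha> @ [v]) = v" by simp
        show ?thesis unfolding C'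
        proof (rule successively_append_iff[THEN iffD2], intro conjI)
          show "a # \<alpha> @ [v] = [] \<or> rev \<gamma> = [] \<or> {last (a # \<alpha> @ [v]), hd (rev \<gamma>)} \<in> Ed"
            using e unfolding l by blast
        qed (rule s1, rule s3)
      qed
      moreover have "{last C, hd C} \<in> Ed"
      proof -
        have "last C = hd q1" unfolding C_def q1 by (cases \<gamma>) auto
        moreover have "{a, hd q1} \<in> Ed" using Cons.prems(4) q ne by (simp add: successively_Cons)
        ultimately show ?thesis unfolding C_def by (simp add: insert_commute)
      qed
      ultimately show ?thesis using nocyc by blast
    qed
  qed
qed



lemma tc_mono:
  assumes "\<And>x. shared t1 x \<subseteq> shared t2 x" "trading_chain E t1 j xs"
  shows "trading_chain E t2 j xs"
  using assms unfolding trading_chain_def by blast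

lemma tc_cong:
  assumes "\<forall>x\<in>set xs. shared t1 x = shared t2 x"
  shows "trading_chain E t1 j xs = trading_chain E t2 j xs"
  using assms unfolding trading_chain_def by (metis nth_mem)

lemma tc_prefix:
  assumes "trading_chain E t j xs" "k < length xs"
  shows "trading_chain E t (xs ! k) (take k xs)"
proof -
  have tk: "take k xs @ [xs ! k] = take (Suc k) xs" using assms(2) by (simp add: take_Suc_conv_app_nth)
  have d: "distinct (take k xs @ [xs ! k])" unfolding tk using assms(1)
    unfolding trading_chain_def by (simp add: distinct_take)
  have s: "set (take k xs) \<subseteq> intermediates E" using assms(1) unfolding trading_chain_def
    by (meson order_trans set_take_subset)
  have h: "hd (take k xs @ [xs ! k]) \<in> seller_nbrs E" unfolding tk using assms
    unfolding trading_chain_def by (metis hd_append2 hd_take length_greater_0_conv less_nat_zero_code list.size(3) zero_less_Suc)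
  have "\<forall>l < length (take k xs). (take k xs @ [xs ! k]) ! Suc l \<in> shared t (take k xs ! l)"
  proof (intro allI impI)
    fix l assume l: "l < length (take k xs)"
    then have lk: "l < k" by simp
    have "(take k xs @ [xs ! k]) ! Suc l = xs ! Suc l" unfolding tk using lk assms(2) by simp
    moreover have "xs ! Suc l = (xs @ [j]) ! Suc l" using lk assms(2) by (simp add: nth_append)
    moreover have "take k xs ! l = xs ! l" using lk by simp
    ultimately show "(take k xs @ [xs ! k]) ! Suc l \<in> shared t (take k xs ! l)"
      using assms lk unfolding trading_chain_def by auto
  qed
  then show ?thesis unfolding trading_chain_def using d s h by blast
qed

lemma tc_seq:
  assumes "trading_chain E t j xs" "l \<le> length xs"
  shows "trading_chain E t ((xs @ [j]) ! l) (take l xs)"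
proof (cases "l = length xs")
  case True then show ?thesis using assms by simp
next
  case False
  then have "l < length xs" using assms by simp
  then show ?thesis using tc_prefix[OF assms(1)] by (simp add: nth_append)
qed

locale TM =
  fixes E :: "'a market" and r :: "'a \<Rightarrow> 'a set"
  assumes fin: "finite (agents E)"
    and sel: "seller E \<notin> agents E"
    and buy: "buyers E \<subseteq> agents E"
    and sn: "seller_nbrs E \<subseteq> agents E"
    and rsub: "\<forall>i\<in>intermediates E. r i \<subseteq> agents E"
    and cpos: "\<forall>i\<in>intermediates E. 0 \<le> cost E i"
    and tree: "is_tree (net_vertices E) (net_edges E r)"
begin

definition ok :: "'a profile \<Rightarrow> bool" where
  "ok t \<longleftrightarrow> (\<forall>i\<in>intermediates E. shared t i \<subseteq> r i)"

lemma inter_agents: "intermediates E \<subseteq> agents E" by (auto simp: intermediates_def)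

lemma tc_agent:
  assumes "trading_chain E t j xs" "ok t"
  shows "j \<in> agents E"
proof (cases "xs = []")
  case True then show ?thesis using assms sn unfolding trading_chain_def by auto
next
  case False
  define k where "k = length xs - 1"
  have k: "k < length xs" "Suc k = length xs" using False unfolding k_def by auto
  have "(xs @ [j]) ! Suc k \<in> shared t (xs ! k)" using assms k unfolding trading_chain_def by blast
  then have "j \<in> shared t (xs ! k)" using k by simp
  moreover have "xs ! k \<in> intermediates E" using assms k unfolding trading_chain_def by (meson nth_mem subsetD)
  ultimately show ?thesis using assms(2) rsub unfolding ok_def by blast
qed

lemma tc_walk:
  assumes "trading_chain E t j xs" "ok t"
  shows "successively (\<lambda>x y. {x, y} \<in> net_edges E r) (seller E # xs @ [j])"
proof -
  have h: "hd (xs @ [j]) \<in> seller_nbrs E" using assms unfolding trading_chain_def by blast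
  have e1: "{seller E, hd (xs @ [j])} \<in> net_edges E r"
    unfolding net_edges_def by (intro UnI1 CollectI exI[of _ "hd (xs @ [j])"] conjI refl h)
  have "\<forall>i. Suc i < length (xs @ [j]) \<longrightarrow> {(xs @ [j]) ! i, (xs @ [j]) ! Suc i} \<in> net_edges E r"
  proof (intro allI impI)
    fix i assume "Suc i < length (xs @ [j])"
    then have i: "i < length xs" by simp
    have "(xs @ [j]) ! Suc i \<in> shared t (xs ! i)" using assms i unfolding trading_chain_def by blast
    moreover have xi: "xs ! i \<in> intermediates E" using assms i unfolding trading_chain_def by (meson nth_mem subsetD)
    ultimately have "(xs @ [j]) ! Suc i \<in> r (xs ! i)" using assms(2) unfolding ok_def by blast
    moreover have "(xs @ [j]) ! i = xs ! i" using i by (simp add: nth_append)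
    ultimately show "{(xs @ [j]) ! i, (xs @ [j]) ! Suc i} \<in> net_edges E r"
      unfolding net_edges_def
      by (intro UnI2 CollectI exI[of _ "xs ! i"] exI[of _ "(xs @ [j]) ! Suc i"] conjI) (simp_all add: xi)
  qed
  then have "successively (\<lambda>x y. {x, y} \<in> net_edges E r) (xs @ [j])"
    unfolding successively_conv_nth by blast
  then show ?thesis using e1 by (simp add: successively_Cons)
qed

lemma tc_distinct:
  assumes "trading_chain E t j xs" "ok t"
  shows "distinct (seller E # xs @ [j])"
proof -
  have "seller E \<notin> set xs" using assms sel inter_agents unfolding trading_chain_def by blast
  moreover have "seller E \<noteq> j" using tc_agent[OF assms] sel by blast
  ultimately show ?thesis using assms unfolding trading_chain_def by simp
qed

lemma nocyc: "\<not> (\<exists>p. 3 \<le> length p \<and> distinct p \<and>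
              successively (\<lambda>x y. {x, y} \<in> net_edges E r) p \<and> {last p, hd p} \<in> net_edges E r)"
  using tree unfolding is_tree_def walk_idx_conv by blast

lemma tc_unique:
  assumes "ok t" "trading_chain E t j xs" "trading_chain E t j ys"
  shows "xs = ys"
proof -
  have "seller E # xs @ [j] = seller E # ys @ [j]"
    by (rule walk_unique[OF nocyc]) (use assms tc_walk tc_distinct in auto)
  then show ?thesis by simp
qed

lemma lcc_eq:
  assumes "ok t" "trading_chain E t j xs"
  shows "lcc E t j = xs"
  unfolding lcc_def
  by (rule some_equality) (use assms tc_unique in auto)

end


lemma shared_without: "shared (without t X) x = (if x \<in> X then {} else shared t x)"
  unfolding shared_def without_def by simp

lemma bid_without: "bid_of (without t X) x = (if x \<in> X then 0 else bid_of t x)"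
  unfolding bid_of_def without_def by simp

lemma without_None: "without t X j \<noteq> None \<longleftrightarrow> j \<notin> X \<and> t j \<noteq> None"
  unfolding without_def by simp

lemma distinct_nth_notin_take:
  assumes "distinct ys" "k \<le> l" "l < length ys"
  shows "ys ! l \<notin> set (take k ys)"
proof
  assume "ys ! l \<in> set (take k ys)"
  then obtain p where p: "p < length (take k ys)" "take k ys ! p = ys ! l" by (auto simp: in_set_conv_nth)
  then have "ys ! p = ys ! l" "p < k" by auto
  moreover have "p < length ys" using p assms by simp
  ultimately have "p = l" using nth_eq_iff_index_eq[OF assms(1)] assms(3) by blast
  then show False using \<open>p < k\<close> assms(2) by simp
qed

context TM begin

definition Wset :: "'a profile \<Rightarrow> real set" where
  "Wset t = {bid_of t j - chain_cost E xs | j xs.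
                     j \<in> buyers E \<and> t j \<noteq> None \<and> trading_chain E t j xs}"

lemma Wstar_Wset: "Wstar E t = Max (insert 0 (Wset t))"
  unfolding Wstar_def Wset_def by simp

lemma Wset_fin: "finite (Wset t)"
proof -
  let ?L = "{xs. set xs \<subseteq> agents E \<and> length xs \<le> card (agents E)}"
  have "Wset t \<subseteq> (\<lambda>(j, xs). bid_of t j - chain_cost E xs) ` (agents E \<times> ?L)"
  proof
    fix v assume "v \<in> Wset t"
    then obtain j xs where v: "v = bid_of t j - chain_cost E xs" "j \<in> buyers E" "trading_chain E t j xs"
      unfolding Wset_def by blast
    have "set xs \<subseteq> agents E" "distinct xs" using v(3) inter_agents unfolding trading_chain_def by auto
    then have "length xs \<le> card (agents E)" using fin by (metis card_mono distinct_card)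
    then show "v \<in> (\<lambda>(j, xs). bid_of t j - chain_cost E xs) ` (agents E \<times> ?L)"
      using v buy \<open>set xs \<subseteq> agents E\<close> by (auto intro!: image_eqI[of _ _ "(j, xs)"])
  qed
  moreover have "finite (agents E \<times> ?L)" using fin finite_lists_length_le by blast
  ultimately show ?thesis by (meson finite_imageI finite_subset)
qed

lemma W_ge:
  assumes "j \<in> buyers E" "t j \<noteq> None" "trading_chain E t j xs"
  shows "bid_of t j - chain_cost E xs \<le> Wstar E t"
proof -
  have "bid_of t j - chain_cost E xs \<in> Wset t" using assms unfolding Wset_def by blast
  then show ?thesis unfolding Wstar_Wset using Wset_fin by (simp add: Max_ge)
qed

lemma W_ge0: "0 \<le> Wstar E t"
  unfolding Wstar_Wset using Wset_fin by (simp add: Max_ge)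

lemma W_le:
  assumes "0 \<le> M"
    "\<And>j xs. j \<in> buyers E \<Longrightarrow> t j \<noteq> None \<Longrightarrow> trading_chain E t j xs \<Longrightarrow> bid_of t j - chain_cost E xs \<le> M"
  shows "Wstar E t \<le> M"
  unfolding Wstar_Wset using Wset_fin assms unfolding Wset_def by (auto simp: Max_le_iff)

lemma W_mono:
  assumes "\<And>x. shared t1 x \<subseteq> shared t2 x"
    "\<And>j. j \<in> buyers E \<Longrightarrow> t1 j \<noteq> None \<Longrightarrow> t2 j \<noteq> None \<and> bid_of t1 j = bid_of t2 j"
  shows "Wstar E t1 \<le> Wstar E t2"
proof (rule W_le[OF W_ge0])
  fix j xs assume "j \<in> buyers E" "t1 j \<noteq> None" "trading_chain E t1 j xs"
  then show "bid_of t1 j - chain_cost E xs \<le> Wstar E t2"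
  proof -
    have "trading_chain E t2 j xs" using tc_mono[of t1 t2, OF assms(1)] \<open>trading_chain E t1 j xs\<close> by blast
    moreover have "t2 j \<noteq> None" "bid_of t1 j = bid_of t2 j" using assms(2) \<open>j \<in> buyers E\<close> \<open>t1 j \<noteq> None\<close> by auto
    ultimately show ?thesis using W_ge \<open>j \<in> buyers E\<close> by simp
  qed
qed

lemma W_without_mono:
  assumes "X \<subseteq> Y"
  shows "Wstar E (without t Y) \<le> Wstar E (without t X)"
proof (rule W_mono)
  fix x show "shared (without t Y) x \<subseteq> shared (without t X) x" using assms by (auto simp: shared_without)
next
  fix j assume "without t Y j \<noteq> None"
  then show "without t X j \<noteq> None \<and> bid_of (without t Y) j = bid_of (without t X) j"
    using assms unfolding without_None bid_without by auto
qed

lemma W_without_le: "Wstar E (without t X) \<le> Wstar E t"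
proof (rule W_mono)
  fix x show "shared (without t X) x \<subseteq> shared t x" by (auto simp: shared_without)
next
  fix j assume "without t X j \<noteq> None"
  then show "t j \<noteq> None \<and> bid_of (without t X) j = bid_of t j"
    unfolding without_None bid_without by auto
qed

end

context TM begin
section \<open>Feasible profiles\<close>

lemma feasible_ok: "feasible E r t \<Longrightarrow> ok t"
  unfolding ok_def
proof
  fix i assume f: "feasible E r t" and i: "i \<in> intermediates E"
  show "shared t i \<subseteq> r i"
  proof (cases "t i")
    case None then show ?thesis by (simp add: shared_def)
  next
    case (Some x)
    then have "valid_report E r i x" using f unfolding feasible_def by force
    then obtain R where "R \<subseteq> r i" "x = Share R" using i unfolding valid_report_def intermediates_def by auto
    then show ?thesis using Some by (simp add: shared_def)
  qed
qed

lemma feas_agent: "feasible E r t \<Longrightarrow> t j \<noteq> None \<Longrightarrow> j \<in> agents E"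
  unfolding feasible_def by blast

lemma feas_lcc: "feasible E r t \<Longrightarrow> trading_chain E t j xs \<Longrightarrow> lcc E t j = xs"
  using lcc_eq feasible_ok by blast

lemma feas_chain: "feasible E r t \<Longrightarrow> t j \<noteq> None \<Longrightarrow> trading_chain E t j (lcc E t j)"
  using feas_agent feas_lcc unfolding feasible_def by metis

lemma feas_informed: "feasible E r t \<Longrightarrow> trading_chain E t j xs \<Longrightarrow> t j \<noteq> None"
  using tc_agent feasible_ok unfolding feasible_def by blast

lemma feas_member:
  assumes "feasible E r t" "t j \<noteq> None" "y \<in> set (lcc E t j)"
  shows "t y \<noteq> None"
proof -
  obtain k where "k < length (lcc E t j)" "y = lcc E t j ! k" using assms(3) by (auto simp: in_set_conv_nth)
  then show ?thesis using tc_prefix feas_chain feas_informed assms by metis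
qed

lemma lcc_inter: "feasible E r t \<Longrightarrow> t j \<noteq> None \<Longrightarrow> set (lcc E t j) \<subseteq> intermediates E"
  using feas_chain unfolding trading_chain_def by blast

lemma lcc_distinct: "feasible E r t \<Longrightarrow> t j \<noteq> None \<Longrightarrow> distinct (lcc E t j @ [j])"
  using feas_chain unfolding trading_chain_def by blast

lemma critical_iff:
  assumes "feasible E r t" "t j \<noteq> None"
  shows "critical E t i j \<longleftrightarrow> (i \<in> set (lcc E t j) \<or> i = j)"
  unfolding critical_def using assms feas_chain feas_lcc by metis

lemma dset_eq:
  assumes "feasible E r t"
  shows "dset E t i = {j. t j \<noteq> None \<and> (i \<in> set (lcc E t j) \<or> i = j)}"
  unfolding dset_def using critical_iff[OF assms] by blast

lemma crit_seq_eq: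
  assumes "feasible E r t" "t m \<noteq> None"
  shows "crit_seq E t m = set (lcc E t m @ [m])"
  unfolding crit_seq_def using critical_iff[OF assms] feas_member[OF assms] assms(2) by auto

lemma lcc_seq:
  assumes "feasible E r t" "t m \<noteq> None" "l \<le> length (lcc E t m)"
  shows "lcc E t ((lcc E t m @ [m]) ! l) = take l (lcc E t m)"
  using tc_seq[OF feas_chain[OF assms(1,2)] assms(3)] feas_lcc[OF assms(1)] by blast

lemma seq_informed:
  assumes "feasible E r t" "t m \<noteq> None" "l \<le> length (lcc E t m)"
  shows "t ((lcc E t m @ [m]) ! l) \<noteq> None"
  using tc_seq[OF feas_chain[OF assms(1,2)] assms(3)] feas_informed[OF assms(1)] by blast

lemma dset_mono:
  assumes f: "feasible E r t" and m: "t m \<noteq> None" and kl: "k \<le> l" "l \<le> length (lcc E t m)"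
  shows "dset E t ((lcc E t m @ [m]) ! l) \<subseteq> dset E t ((lcc E t m @ [m]) ! k)"
proof
  let ?xs = "lcc E t m" let ?s = "?xs @ [m]"
  fix j assume "j \<in> dset E t (?s ! l)"
  then have j: "t j \<noteq> None" "?s ! l \<in> set (lcc E t j) \<or> ?s ! l = j" unfolding dset_eq[OF f] by auto
  show "j \<in> dset E t (?s ! k)"
  proof (cases "k = l")
    case True then show ?thesis using \<open>j \<in> dset E t (?s ! l)\<close> by simp
  next
    case False
    then have kl': "k < l" using kl by simp
    then have sk: "?s ! k = ?xs ! k" "k < length ?xs" using kl by (auto simp: nth_append)
    have mem: "?s ! k \<in> set (take l ?xs)" using sk kl' by (auto simp: in_set_conv_nth intro!: exI[of _ k])
    have "?s ! k \<in> set (lcc E t j)"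
      using j(2)
    proof
      assume "?s ! l = j"
      then show ?thesis using mem lcc_seq[OF f m kl(2)] by simp
    next
      assume a: "?s ! l \<in> set (lcc E t j)"
      then obtain p where p: "p < length (lcc E t j)" "?s ! l = lcc E t j ! p" by (auto simp: in_set_conv_nth)
      have "lcc E t (?s ! l) = take p (lcc E t j)"
        using p tc_prefix[OF feas_chain[OF f j(1)]] feas_lcc[OF f] by metis
      then have "take l ?xs = take p (lcc E t j)" using lcc_seq[OF f m kl(2)] by simp
      then show ?thesis using mem by (metis in_set_takeD)
    qed
    then show ?thesis unfolding dset_eq[OF f] using j(1) by blast
  qed
qed

lemma dset_self:
  assumes "feasible E r t" "t i \<noteq> None"
  shows "i \<in> dset E t i"
  unfolding dset_eq[OF assms(1)] using assms(2) by blast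

lemma dset_strict:
  assumes f: "feasible E r t" and m: "t m \<noteq> None" and kl: "k < l" "l \<le> length (lcc E t m)"
  shows "(lcc E t m @ [m]) ! k \<notin> dset E t ((lcc E t m @ [m]) ! l)"
proof
  let ?xs = "lcc E t m" let ?s = "?xs @ [m]"
  assume "?s ! k \<in> dset E t (?s ! l)"
  then have a: "?s ! l \<in> set (lcc E t (?s ! k)) \<or> ?s ! l = ?s ! k" unfolding dset_eq[OF f] by auto
  have d: "distinct ?s" using lcc_distinct[OF f m] .
  have "?s ! l \<noteq> ?s ! k" using d kl nth_eq_iff_index_eq[OF d] by auto
  moreover have "lcc E t (?s ! k) = take k ?s" using lcc_seq[OF f m] kl by simp
  moreover have "?s ! l \<notin> set (take k ?s)" using distinct_nth_notin_take[OF d] kl by simp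
  ultimately show False using a by simp
qed

lemma dset_less_iff:
  assumes f: "feasible E r t" and m: "t m \<noteq> None" and kl: "k \<le> length (lcc E t m)" "l \<le> length (lcc E t m)"
  shows "dset E t ((lcc E t m @ [m]) ! l) \<subset> dset E t ((lcc E t m @ [m]) ! k) \<longleftrightarrow> k < l"
proof
  let ?xs = "lcc E t m" let ?s = "?xs @ [m]"
  assume "dset E t (?s ! l) \<subset> dset E t (?s ! k)"
  moreover have "l \<le> k \<Longrightarrow> dset E t (?s ! k) \<subseteq> dset E t (?s ! l)" using dset_mono[OF f m _ kl(1), of l] by blast
  ultimately show "k < l" by (meson not_le psubset_imp_subset psubset_subset_trans subset_iff_psubset_eq less_le_not_le)
next
  let ?xs = "lcc E t m" let ?s = "?xs @ [m]"
  assume "k < l"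
  then show "dset E t (?s ! l) \<subset> dset E t (?s ! k)"
    using dset_mono[OF f m _ kl(2), of k] dset_strict[OF f m _ kl(2), of k]
      dset_self[OF f seq_informed[OF f m kl(1)]] by auto
qed

lemma crit_succ_eq:
  assumes f: "feasible E r t" and m: "t m \<noteq> None" and k: "k < length (lcc E t m)"
  shows "crit_succ E t m ((lcc E t m @ [m]) ! k) = (lcc E t m @ [m]) ! Suc k"
proof -
  let ?xs = "lcc E t m" let ?s = "?xs @ [m]"
  have cs: "crit_seq E t m = set ?s" using crit_seq_eq[OF f m] .
  have idx: "\<exists>l \<le> length ?xs. K = ?s ! l" if K_in: "K \<in> set ?s" for K
  proof -
    obtain l where "l < length ?s" "?s ! l = K" using in_set_conv_nth[THEN iffD1, OF K_in] by blast
    moreover then have "l \<le> length ?xs" by simp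
    ultimately show ?thesis by blast
  qed
  show ?thesis unfolding crit_succ_def
  proof (rule the_equality)
    show "?s ! Suc k \<in> crit_seq E t m \<and> dset E t (?s ! Suc k) \<subset> dset E t (?s ! k) \<and>
        (\<forall>l\<in>crit_seq E t m. dset E t l \<subset> dset E t (?s ! k) \<longrightarrow> dset E t l \<subseteq> dset E t (?s ! Suc k))"
    proof (intro conjI ballI impI)
      show "?s ! Suc k \<in> crit_seq E t m" unfolding cs by (rule nth_mem) (use k in simp)
      show "dset E t (?s ! Suc k) \<subset> dset E t (?s ! k)" using dset_less_iff[OF f m] k by simp
      fix K assume K: "K \<in> crit_seq E t m" "dset E t K \<subset> dset E t (?s ! k)"
      obtain l where l: "l \<le> length ?xs" "K = ?s ! l" using idx K(1) cs by blast
      then have "k < l" using K(2) dset_less_iff[OF f m] k by simp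
      then show "dset E t K \<subseteq> dset E t (?s ! Suc k)" using dset_mono[OF f m _ l(1), of "Suc k"] l by simp
    qed
  next
    fix K assume K: "K \<in> crit_seq E t m \<and> dset E t K \<subset> dset E t (?s ! k) \<and>
        (\<forall>l\<in>crit_seq E t m. dset E t l \<subset> dset E t (?s ! k) \<longrightarrow> dset E t l \<subseteq> dset E t K)"
    obtain l where l: "l \<le> length ?xs" "K = ?s ! l" using idx K cs by blast
    then have kl: "k < l" using K dset_less_iff[OF f m] k by simp
    have sk_in: "?s ! Suc k \<in> crit_seq E t m" unfolding cs by (rule nth_mem) (use k in simp)
    have "dset E t (?s ! Suc k) \<subset> dset E t (?s ! k)" using dset_less_iff[OF f m, of k "Suc k"] k by simp
    then have "dset E t (?s ! Suc k) \<subseteq> dset E t K"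
      using K sk_in by blast
    then have "\<not> Suc k < l" using dset_strict[OF f m _ l(1), of "Suc k"] dset_self[OF f seq_informed[OF f m, of "Suc k"]] k l
      by auto
    then have "l = Suc k" using kl by simp
    then show "K = ?s ! Suc k" using l by simp
  qed
qed

end


lemma sum_set_nth:
  assumes "distinct xs"
  shows "(\<Sum>i\<in>set xs. f i) = (\<Sum>k<length xs. f (xs ! k))"
proof -
  have "(\<Sum>i\<in>set xs. f i) = sum_list (map f xs)" using assms by (simp add: sum_list_distinct_conv_sum_set)
  also have "\<dots> = (\<Sum>k<length xs. f (xs ! k))" by (simp add: sum_list_sum_nth atLeast0LessThan)
  finally show ?thesis .
qed

lemma chain_cost_nth: "chain_cost E xs = (\<Sum>k<length xs. cost E (xs ! k))"
  unfolding chain_cost_def by (simp add: sum_list_sum_nth atLeast0LessThan)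

lemma chain_cost_set: "distinct xs \<Longrightarrow> chain_cost E xs = (\<Sum>i\<in>set xs. cost E i)"
  unfolding chain_cost_def by (simp add: sum_list_distinct_conv_sum_set)

context TM begin

lemma winnersD:
  assumes "m \<in> winners E t"
  shows "m \<in> buyers E" "t m \<noteq> None" "0 \<le> SW E t m"
    "\<And>j. j \<in> buyers E \<Longrightarrow> t j \<noteq> None \<Longrightarrow> SW E t j \<le> SW E t m"
  using assms unfolding winners_def informed_buyers_def by auto

lemma buyer_not_inter: "j \<in> buyers E \<Longrightarrow> j \<notin> intermediates E"
  unfolding intermediates_def by auto

lemma W_winner:
  assumes f: "feasible E r t" and m: "m \<in> winners E t"
  shows "Wstar E t = SW E t m"
proof (rule antisym)
  show "Wstar E t \<le> SW E t m"
  proof (rule W_le)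
    show "0 \<le> SW E t m" using winnersD[OF m] by simp
    fix j xs assume j: "j \<in> buyers E" "t j \<noteq> None" "trading_chain E t j xs"
    then have "lcc E t j = xs" using feas_lcc[OF f] by blast
    then show "bid_of t j - chain_cost E xs \<le> SW E t m" using winnersD(4)[OF m j(1,2)]
      unfolding SW_def by simp
  qed
next
  show "SW E t m \<le> Wstar E t" unfolding SW_def
    using W_ge winnersD[OF m] feas_chain[OF f] by blast
qed

lemma winners_ne:
  assumes f: "feasible E r t" and j: "j \<in> buyers E" "t j \<noteq> None" and sw: "0 \<le> SW E t j"
  shows "winners E t \<noteq> {}"
proof -
  let ?I = "informed_buyers E t"
  have "?I \<subseteq> agents E" using buy unfolding informed_buyers_def by blast
  then have fi: "finite ?I" using fin finite_subset by blast
  have jI: "j \<in> ?I" using j unfolding informed_buyers_def by simp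
  then have ne: "SW E t ` ?I \<noteq> {}" by blast
  have "Max (SW E t ` ?I) \<in> SW E t ` ?I" using Max_in[OF finite_imageI[OF fi] ne] .
  then obtain m where m: "m \<in> ?I" "SW E t m = Max (SW E t ` ?I)" by (metis imageE)
  have all: "\<forall>i\<in>?I. SW E t i \<le> SW E t m"
  proof
    fix i assume "i \<in> ?I"
    then have "SW E t i \<in> SW E t ` ?I" by blast
    then show "SW E t i \<le> SW E t m" unfolding m(2) using Max_ge[OF finite_imageI[OF fi]] by blast
  qed
  have "0 \<le> SW E t m" using sw all jI by (meson order_trans)
  then have "m \<in> winners E t" using m(1) all unfolding winners_def by blast
  then show ?thesis by blast
qed

lemma W_nowinner:
  assumes f: "feasible E r t" and w: "winners E t = {}"
  shows "Wstar E t = 0"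
proof (rule antisym)
  show "Wstar E t \<le> 0"
  proof (rule W_le)
    fix j xs assume j: "j \<in> buyers E" "t j \<noteq> None" "trading_chain E t j xs"
    then have "lcc E t j = xs" using feas_lcc[OF f] by blast
    show "bid_of t j - chain_cost E xs \<le> 0"
    proof (rule ccontr)
      assume "\<not> bid_of t j - chain_cost E xs \<le> 0"
      then have "0 \<le> SW E t j" unfolding SW_def using \<open>lcc E t j = xs\<close> by simp
      then show False using winners_ne[OF f j(1,2)] w by blast
    qed
  qed simp
qed (rule W_ge0)

lemma outcomes_cases:
  assumes "w \<in> outcomes E t"
  shows "(w = None \<and> winners E t = {}) \<or> (\<exists>m. w = Some m \<and> m \<in> winners E t)"
  using assms unfolding outcomes_def by (auto split: if_splits)

lemma outcomes_fin: "finite (outcomes E t)" "outcomes E t \<noteq> {}"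
proof -
  have "winners E t \<subseteq> agents E" using buy unfolding winners_def informed_buyers_def by auto
  then have "finite (winners E t)" using fin finite_subset by blast
  then show "finite (outcomes E t)" unfolding outcomes_def by simp
  show "outcomes E t \<noteq> {}" unfolding outcomes_def by simp
qed

end

context TM begin
section \<open>Allocation and payments of the winner chain\<close>

lemma alloc_Some:
  assumes f: "feasible E r t" and m: "m \<in> winners E t"
  shows "alloc E t (Some m) i = (if i = m then 1 else if i \<in> set (lcc E t m) then -1 else 0)"
  unfolding alloc_def by simp

lemma m_notin_lcc:
  assumes f: "feasible E r t" and m: "m \<in> winners E t"
  shows "m \<notin> set (lcc E t m)"
  using lcc_distinct[OF f winnersD(2)[OF m]] by simp

lemma social_welfare_Some:
  assumes f: "feasible E r t" and m: "m \<in> winners E t"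
  shows "social_welfare E t (Some m) = SW E t m"
proof -
  let ?xs = "lcc E t m"
  have mA: "m \<in> agents E" using winnersD(1)[OF m] buy by blast
  have xsA: "set ?xs \<subseteq> agents E" using lcc_inter[OF f winnersD(2)[OF m]] inter_agents by blast
  have mx: "m \<notin> set ?xs" using m_notin_lcc[OF f m] .
  have rv: "reported_value E t (Some m) i =
      (if i = m then bid_of t m else 0) + (if i \<in> set ?xs then - cost E i else 0)" for i
    unfolding reported_value_def alloc_def using mx by auto
  have "social_welfare E t (Some m) = (\<Sum>i\<in>agents E. (if i = m then bid_of t m else 0))
      + (\<Sum>i\<in>agents E. (if i \<in> set ?xs then - cost E i else 0))"
    unfolding social_welfare_def rv by (simp add: sum.distrib)
  also have "\<dots> = bid_of t m + (\<Sum>i\<in>set ?xs. - cost E i)"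
  proof -
    have "(\<Sum>i\<in>agents E. (if i \<in> set ?xs then - cost E i else 0)) = (\<Sum>i\<in>agents E \<inter> set ?xs. - cost E i)"
      using sum.inter_restrict[OF fin, of "\<lambda>i. - cost E i" "set ?xs"] by simp
    also have "agents E \<inter> set ?xs = set ?xs" using xsA by blast
    finally show ?thesis using mA fin by simp
  qed
  also have "\<dots> = SW E t m" unfolding SW_def
    using chain_cost_set[of ?xs E] lcc_distinct[OF f winnersD(2)[OF m]] by (simp add: sum_negf)
  finally show ?thesis .
qed

lemma social_welfare_None: "social_welfare E t None = 0"
  unfolding social_welfare_def reported_value_def alloc_def by simp

lemma efficient: "efficient E r"
  unfolding efficient_def
proof (intro allI impI ballI)
  fix t w assume f: "feasible E r t" and w: "w \<in> outcomes E t"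
  show "social_welfare E t w = Wstar E t"
    using outcomes_cases[OF w]
  proof
    assume "w = None \<and> winners E t = {}"
    then show ?thesis using W_nowinner[OF f] social_welfare_None by simp
  next
    assume "\<exists>m. w = Some m \<and> m \<in> winners E t"
    then obtain m where "w = Some m" "m \<in> winners E t" by blast
    then show ?thesis using W_winner[OF f] social_welfare_Some[OF f] by simp
  qed
qed

lemma dset_winner:
  assumes f: "feasible E r t" and m: "m \<in> winners E t"
  shows "dset E t m = {m}"
proof -
  have "m \<notin> set (lcc E t j)" if "t j \<noteq> None" for j
    using lcc_inter[OF f that] buyer_not_inter[OF winnersD(1)[OF m]] by blast
  then show ?thesis unfolding dset_eq[OF f] using winnersD(2)[OF m] by auto
qed

lemma pay_m:
  assumes f: "feasible E r t" and m: "m \<in> winners E t"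
  shows "payment E t (Some m) m = Wstar E (without t {m}) + chain_cost E (lcc E t m)"
  unfolding payment_def by simp

lemma pay_k:
  assumes f: "feasible E r t" and m: "m \<in> winners E t" and k: "k < length (lcc E t m)"
  shows "payment E t (Some m) (lcc E t m ! k) =
     Wstar E (without t (dset E t ((lcc E t m @ [m]) ! k)))
     - Wstar E (without t (dset E t ((lcc E t m @ [m]) ! Suc k))) - cost E (lcc E t m ! k)"
proof -
  let ?xs = "lcc E t m" let ?s = "?xs @ [m]"
  have sk: "?s ! k = ?xs ! k" using k by (simp add: nth_append)
  have ne: "?xs ! k \<noteq> m" using k m_notin_lcc[OF f m] nth_mem by metis
  have cs: "?xs ! k \<in> crit_seq E t m" unfolding crit_seq_eq[OF f winnersD(2)[OF m]] using k by simp
  have "crit_succ E t m (?xs ! k) = ?s ! Suc k" using crit_succ_eq[OF f winnersD(2)[OF m] k] sk by simp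
  then show ?thesis unfolding payment_def using ne cs sk by simp
qed

lemma pay_other:
  assumes f: "feasible E r t" and m: "m \<in> winners E t" and i: "i \<notin> set (lcc E t m @ [m])"
  shows "payment E t (Some m) i = 0"
  unfolding payment_def using i crit_seq_eq[OF f winnersD(2)[OF m]] by auto

lemma revenue_Some:
  assumes f: "feasible E r t" and m: "m \<in> winners E t"
  shows "revenue E t (Some m) = Wstar E (without t (dset E t ((lcc E t m @ [m]) ! 0)))"
proof -
  let ?xs = "lcc E t m" let ?s = "?xs @ [m]" let ?n = "length ?xs"
  let ?p = "payment E t (Some m)"
  define g where "g k = Wstar E (without t (dset E t (?s ! k)))" for k
  have mA: "m \<in> agents E" using winnersD(1)[OF m] buy by blast
  have sA: "set ?s \<subseteq> agents E" using lcc_inter[OF f winnersD(2)[OF m]] inter_agents mA by auto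
  have d: "distinct ?s" using lcc_distinct[OF f winnersD(2)[OF m]] .
  have "revenue E t (Some m) = (\<Sum>i\<in>set ?s. ?p i)"
    unfolding revenue_def using pay_other[OF f m] sA fin by (intro sum.mono_neutral_right) auto
  also have "\<dots> = (\<Sum>k<Suc ?n. ?p (?s ! k))" using sum_set_nth[OF d] by simp
  also have "\<dots> = (\<Sum>k<?n. ?p (?s ! k)) + ?p m" by simp
  also have "(\<Sum>k<?n. ?p (?s ! k)) = (\<Sum>k<?n. (g k - g (Suc k)) - cost E (?xs ! k))"
  proof (rule sum.cong)
    fix k assume "k \<in> {..<?n}"
    then have k: "k < ?n" by simp
    then have "?s ! k = ?xs ! k" by (simp add: nth_append)
    then show "?p (?s ! k) = (g k - g (Suc k)) - cost E (?xs ! k)"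
      using pay_k[OF f m k] unfolding g_def by simp
  qed simp
  also have "\<dots> = (\<Sum>k<?n. g k - g (Suc k)) - (\<Sum>k<?n. cost E (?xs ! k))"
    by (rule sum_subtractf)
  also have "\<dots> = g 0 - g ?n - chain_cost E ?xs"
    unfolding sum_lessThan_telescope' chain_cost_nth ..
  also have "g ?n = Wstar E (without t {m})" unfolding g_def using dset_winner[OF f m] by simp
  finally show ?thesis using pay_m[OF f m] unfolding g_def by simp
qed

lemma revenue_None: "revenue E t None = 0"
  unfolding revenue_def payment_def by simp

end


lemma second_le:
  fixes f :: "'a \<Rightarrow> real"
  assumes A: "finite A" "2 \<le> card A" and le: "\<forall>j\<in>A - {h}. f j \<le> V"
  shows "sorted_list_of_multiset (image_mset f (mset_set A)) ! (card A - 2) \<le> V"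
proof (rule ccontr)
  define L where "L = sorted_list_of_multiset (image_mset f (mset_set A))"
  define n where "n = card A"
  define x where "x = L ! (n - 2)"
  have n2: "2 \<le> n" using A(2) unfolding n_def .
  assume "\<not> sorted_list_of_multiset (image_mset f (mset_set A)) ! (card A - 2) \<le> V"
  then have xV: "V < x" unfolding x_def L_def n_def by simp
  have "size (mset L) = size (image_mset f (mset_set A))" unfolding L_def by simp
  then have len: "length L = n" unfolding n_def by (simp only: size_mset size_image_mset size_mset_set)
  have so: "sorted L" unfolding L_def by simp
  have i1: "n - 2 < length L" "n - 1 < length L" "n - 2 \<le> n - 1" using len n2 by auto
  have "x \<le> L ! (n - 1)" unfolding x_def using sorted_nth_mono[OF so i1(3) i1(2)] .
  moreover have "x \<le> L ! (n - 2)" unfolding x_def by simp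
  ultimately have sub: "{n - 2, n - 1} \<subseteq> {i. i < length L \<and> x \<le> L ! i}" using i1 by blast
  have fin1: "finite {i. i < length L \<and> x \<le> L ! i}" by simp
  have "n - 2 \<noteq> n - 1" using n2 by simp
  then have "card {n - 2, n - 1} = 2" by simp
  then have "2 \<le> card {i. i < length L \<and> x \<le> L ! i}"
    using card_mono[OF fin1 sub] by simp
  also have "\<dots> = length (filter (\<lambda>v. x \<le> v) L)" by (rule length_filter_conv_card[symmetric])
  also have "\<dots> = size (mset (filter (\<lambda>v. x \<le> v) L))" by (simp only: size_mset)
  also have "\<dots> = size (filter_mset (\<lambda>v. x \<le> v) (image_mset f (mset_set A)))"
    unfolding L_def by (simp only: mset_filter mset_sorted_list_of_multiset)
  also have "\<dots> = card {a \<in> A. x \<le> f a}" using A(1) by (simp add: filter_mset_image_mset)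
  also have "\<dots> \<le> card {h}"
  proof (rule card_mono)
    show "{a \<in> A. x \<le> f a} \<subseteq> {h}"
    proof
      fix a assume a: "a \<in> {a \<in> A. x \<le> f a}"
      show "a \<in> {h}"
      proof (rule ccontr)
        assume "a \<notin> {h}"
        then have "f a \<le> V" using le a by blast
        then show False using a xV by simp
      qed
    qed
  qed simp
  finally show False by simp
qed


context TM begin

lemma vickrey_le:
  assumes "\<forall>j\<in>buyers E \<inter> seller_nbrs E - {h}. bid_of t j \<le> V" "0 \<le> V"
  shows "vickrey_revenue E t \<le> V"
proof -
  have "finite (buyers E \<inter> seller_nbrs E)" using fin buy finite_subset by blast
  show ?thesis
  proof (cases "card (buyers E \<inter> seller_nbrs E) < 2")
    case True then show ?thesis unfolding vickrey_revenue_def Let_def using assms by simp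
  next
    case False
    then show ?thesis unfolding vickrey_revenue_def Let_def
      using second_le[of "buyers E \<inter> seller_nbrs E" h "bid_of t" V] assms \<open>finite _\<close> by simp
  qed
qed

lemma tc_nil: "j \<in> seller_nbrs E \<Longrightarrow> trading_chain E t j []"
  unfolding trading_chain_def by simp

lemma revenue_vickrey:
  assumes f: "feasible E r t" and m: "m \<in> winners E t"
  shows "vickrey_revenue E t \<le> revenue E t (Some m)"
proof -
  let ?h = "(lcc E t m @ [m]) ! 0"
  let ?t = "without t (dset E t ?h)"
  have "bid_of t j \<le> Wstar E ?t" if j: "j \<in> buyers E \<inter> seller_nbrs E - {?h}" for j
  proof -
    have c: "trading_chain E t j []" using tc_nil j by blast
    then have inf: "t j \<noteq> None" using feas_informed[OF f] by blast
    have "lcc E t j = []" using feas_lcc[OF f c] .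
    then have "j \<notin> dset E t ?h" using j unfolding dset_eq[OF f] by auto
    then have "?t j \<noteq> None" "bid_of ?t j = bid_of t j" using inf unfolding without_None bid_without by auto
    moreover have "trading_chain E ?t j []" using tc_nil j by blast
    ultimately show ?thesis using W_ge[of j ?t "[]"] j by (simp add: chain_cost_def)
  qed
  then show ?thesis unfolding revenue_Some[OF f m] using vickrey_le W_ge0 by blast
qed

lemma wbb: "weakly_budget_balanced E r"
  unfolding weakly_budget_balanced_def
proof (intro allI impI ballI)
  fix t w assume f: "feasible E r t" and w: "w \<in> outcomes E t"
  show "0 \<le> revenue E t w"
    using outcomes_cases[OF w] revenue_None revenue_Some[OF f] W_ge0 by auto
qed

lemma vickrey_part:
  "\<forall>t. feasible E r t \<longrightarrow> (\<forall>w\<in>outcomes E t. vickrey_revenue E t \<le> revenue E t w)"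
proof (intro allI impI ballI)
  fix t w assume f: "feasible E r t" and w: "w \<in> outcomes E t"
  show "vickrey_revenue E t \<le> revenue E t w"
    using outcomes_cases[OF w]
  proof
    assume a: "w = None \<and> winners E t = {}"
    have "vickrey_revenue E t \<le> 0"
    proof (rule vickrey_le)
      show "\<forall>j\<in>buyers E \<inter> seller_nbrs E - {undefined}. bid_of t j \<le> 0"
      proof
        fix j assume j: "j \<in> buyers E \<inter> seller_nbrs E - {undefined}"
        have c: "trading_chain E t j []" using tc_nil j by blast
        then have inf: "t j \<noteq> None" using feas_informed[OF f] by blast
        have "lcc E t j = []" using feas_lcc[OF f c] .
        show "bid_of t j \<le> 0"
        proof (rule ccontr)
          assume "\<not> bid_of t j \<le> 0"
          then have "0 \<le> SW E t j" unfolding SW_def \<open>lcc E t j = []\<close> by (simp add: chain_cost_def)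
          then show False using winners_ne[OF f _ inf] j a by blast
        qed
      qed
    qed simp
    then show ?thesis using a revenue_None by simp
  next
    assume "\<exists>m. w = Some m \<and> m \<in> winners E t"
    then show ?thesis using revenue_vickrey[OF f] by blast
  qed
qed

end

context TM begin
section \<open>Utilities\<close>

lemma util_None: "utility E b t None i = 0"
  unfolding utility_def true_value_def payment_def alloc_def by simp

lemma util_other:
  assumes f: "feasible E r t" and m: "m \<in> winners E t" and i: "i \<notin> set (lcc E t m @ [m])"
  shows "utility E b t (Some m) i = 0"
proof -
  have "alloc E t (Some m) i = 0" unfolding alloc_def using i by auto
  then show ?thesis unfolding utility_def true_value_def using pay_other[OF f m i] by simp
qed

lemma util_m:
  assumes f: "feasible E r t" and m: "m \<in> winners E t"
  shows "utility E b t (Some m) m = b m - Wstar E (without t {m}) - chain_cost E (lcc E t m)"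
proof -
  have "alloc E t (Some m) m = 1" unfolding alloc_def by simp
  then show ?thesis unfolding utility_def true_value_def pay_m[OF f m] by simp
qed

lemma util_k:
  assumes f: "feasible E r t" and m: "m \<in> winners E t" and k: "k < length (lcc E t m)"
  shows "utility E b t (Some m) (lcc E t m ! k) =
     Wstar E (without t (dset E t ((lcc E t m @ [m]) ! Suc k)))
     - Wstar E (without t (dset E t ((lcc E t m @ [m]) ! k)))"
proof -
  have ne: "lcc E t m ! k \<noteq> m" using k m_notin_lcc[OF f m] nth_mem by metis
  have "lcc E t m ! k \<in> set (lcc E t m)" using k by simp
  then have "alloc E t (Some m) (lcc E t m ! k) = -1" unfolding alloc_def using ne by simp
  then show ?thesis unfolding utility_def true_value_def pay_k[OF f m k] by simp
qed

lemma util_k_nonneg: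
  assumes f: "feasible E r t" and m: "m \<in> winners E t" and k: "k < length (lcc E t m)"
  shows "0 \<le> utility E b t (Some m) (lcc E t m ! k)"
  unfolding util_k[OF f m k]
  using W_without_mono[OF dset_mono[OF f winnersD(2)[OF m], of k "Suc k"]] k by simp

lemma util_inter_nonneg:
  assumes f: "feasible E r t" and i: "i \<in> intermediates E" and w: "w \<in> outcomes E t"
  shows "0 \<le> utility E b t w i"
  using outcomes_cases[OF w]
proof
  assume "w = None \<and> winners E t = {}" then show ?thesis using util_None by simp
next
  assume "\<exists>m. w = Some m \<and> m \<in> winners E t"
  then obtain m where wm: "w = Some m" and m: "m \<in> winners E t" by blast
  show ?thesis
  proof (cases "i \<in> set (lcc E t m)")
    case True
    then obtain k where "k < length (lcc E t m)" "lcc E t m ! k = i" using in_set_conv_nth[THEN iffD1, OF True] by blast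
    then show ?thesis using util_k_nonneg[OF f m, of k b] wm by simp
  next
    case False
    then have "i \<noteq> m" using i winnersD(1)[OF m] buyer_not_inter by blast
    then show ?thesis using util_other[OF f m] False wm by simp
  qed
qed

lemma util_buyer_nonneg:
  assumes f: "feasible E r t" and i: "i \<in> buyers E" and ti: "t i = Some (Bid (b i))"
    and w: "w \<in> outcomes E t"
  shows "0 \<le> utility E b t w i"
  using outcomes_cases[OF w]
proof
  assume "w = None \<and> winners E t = {}" then show ?thesis using util_None by simp
next
  assume "\<exists>m. w = Some m \<and> m \<in> winners E t"
  then obtain m where wm: "w = Some m" and m: "m \<in> winners E t" by blast
  show ?thesis
  proof (cases "i = m")
    case True
    have "bid_of t m = b m" using ti True unfolding bid_of_def by simp
    moreover have "Wstar E (without t {m}) \<le> SW E t m" using W_without_le[of t "{m}"] W_winner[OF f m] by simp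
    ultimately show ?thesis using util_m[OF f m, of b] True wm unfolding SW_def by simp
  next
    case False
    have "i \<notin> set (lcc E t m)" using lcc_inter[OF f winnersD(2)[OF m]] buyer_not_inter[OF i] by blast
    then show ?thesis using util_other[OF f m] False wm by simp
  qed
qed

lemma ir: "individually_rational E b r"
  unfolding individually_rational_def
proof (intro allI impI conjI ballI)
  fix t i w assume f: "feasible E r t"
  {
    assume "i \<in> buyers E" "t i = Some (Bid (b i))" "w \<in> outcomes E t"
    then show "0 \<le> utility E b t w i" using util_buyer_nonneg[OF f] by blast
  }
  {
    assume "i \<in> intermediates E" "w \<in> outcomes E t"
    then show "0 \<le> utility E b t w i" using util_inter_nonneg[OF f] by blast
  }
qed

end


lemma avg_le:
  fixes f :: "'b \<Rightarrow> real"
  assumes "finite S" "S \<noteq> {}" "\<And>a. a \<in> S \<Longrightarrow> f a \<le> K"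
  shows "(\<Sum>a\<in>S. f a) / real (card S) \<le> K"
proof -
  have c: "0 < real (card S)" using assms(1,2) by (simp add: card_gt_0_iff)
  have "(\<Sum>a\<in>S. f a) \<le> real (card S) * K" using sum_bounded_above[of S f K] assms(3) by simp
  then show ?thesis using c by (simp add: divide_le_eq mult.commute)
qed

lemma avg_ge:
  fixes f :: "'b \<Rightarrow> real"
  assumes "finite S" "S \<noteq> {}" "\<And>a. a \<in> S \<Longrightarrow> K \<le> f a"
  shows "K \<le> (\<Sum>a\<in>S. f a) / real (card S)"
proof -
  have c: "0 < real (card S)" using assms(1,2) by (simp add: card_gt_0_iff)
  have "real (card S) * K \<le> (\<Sum>a\<in>S. f a)" using sum_bounded_below[of S K f] assms(3) by simp
  then show ?thesis using c by (simp add: le_divide_eq mult.commute)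
qed

lemma avg_mono:
  fixes f g :: "'b \<Rightarrow> real"
  assumes "finite S1" "S1 \<noteq> {}" "finite S0" "S0 \<noteq> {}"
    and le: "\<And>a c. a \<in> S1 \<Longrightarrow> c \<in> S0 \<Longrightarrow> f a \<le> g c"
  shows "(\<Sum>a\<in>S1. f a) / real (card S1) \<le> (\<Sum>a\<in>S0. g a) / real (card S0)"
proof -
  define K where "K = Min (g ` S0)"
  have "K \<in> g ` S0" unfolding K_def using assms(3,4) by (intro Min_in) auto
  then obtain c where c: "c \<in> S0" "g c = K" by blast
  have "(\<Sum>a\<in>S1. f a) / real (card S1) \<le> K"
  proof (rule avg_le[OF assms(1,2)])
    fix a assume "a \<in> S1" then show "f a \<le> K" using le[OF _ c(1)] c(2) by simp
  qed
  also have "K \<le> (\<Sum>a\<in>S0. g a) / real (card S0)"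
  proof (rule avg_ge[OF assms(3,4)])
    fix a assume "a \<in> S0" then show "K \<le> g a" unfolding K_def using assms(3) by (intro Min_le) auto
  qed
  finally show ?thesis .
qed

lemma tc_eq_shared:
  assumes "shared t1 = shared t2"
  shows "trading_chain E t1 = trading_chain E t2"
  by (intro ext) (simp add: trading_chain_def assms)

lemma lcc_eq_tc:
  assumes "trading_chain E t1 = trading_chain E t2"
  shows "lcc E t1 = lcc E t2"
  by (intro ext) (simp add: lcc_def assms)

context TM begin

definition valid_all :: "('a \<Rightarrow> 'a report) \<Rightarrow> bool" where
  "valid_all \<rho> \<longleftrightarrow> (\<forall>j\<in>agents E. valid_report E r j (\<rho> j))"

lemma realize_val: "realize E \<rho> j \<noteq> None \<Longrightarrow> realize E \<rho> j = Some (\<rho> j)"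
  unfolding realize_def by (auto split: if_splits)

lemma realize_iff: "realize E \<rho> j \<noteq> None \<longleftrightarrow> j \<in> agents E \<and> (\<exists>xs. trading_chain E (Some \<circ> \<rho>) j xs)"
  unfolding realize_def by simp

lemma realize_tc: "trading_chain E (realize E \<rho>) j xs \<longleftrightarrow> trading_chain E (Some \<circ> \<rho>) j xs"
proof
  assume "trading_chain E (realize E \<rho>) j xs"
  moreover have "shared (realize E \<rho>) x \<subseteq> shared (Some \<circ> \<rho>) x" for x
    unfolding shared_def realize_def by auto
  ultimately show "trading_chain E (Some \<circ> \<rho>) j xs" using tc_mono[of "realize E \<rho>" "Some \<circ> \<rho>"] by blast
next
  assume a: "trading_chain E (Some \<circ> \<rho>) j xs"
  have "\<forall>x\<in>set xs. shared (Some \<circ> \<rho>) x = shared (realize E \<rho>) x"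
  proof
    fix x assume x: "x \<in> set xs"
    then obtain k where k: "k < length xs" "xs ! k = x" using in_set_conv_nth[THEN iffD1, OF x] by blast
    then have "trading_chain E (Some \<circ> \<rho>) x (take k xs)" using tc_prefix[OF a] by blast
    moreover have "x \<in> agents E" using x a inter_agents unfolding trading_chain_def by blast
    ultimately have "realize E \<rho> x = Some (\<rho> x)" unfolding realize_def by auto
    then show "shared (Some \<circ> \<rho>) x = shared (realize E \<rho>) x" unfolding shared_def by simp
  qed
  then show "trading_chain E (realize E \<rho>) j xs" using tc_cong[of xs "Some \<circ> \<rho>" "realize E \<rho>" E j] a by simp
qed

lemma realize_feasible:
  assumes "valid_all \<rho>"
  shows "feasible E r (realize E \<rho>)"
  unfolding feasible_def
proof (rule conjI)
  show "\<forall>i. realize E \<rho> i \<noteq> None \<longrightarrow> i \<in> agents E \<and> valid_report E r i (the (realize E \<rho> i))"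
  proof (intro allI impI)
    fix i assume a: "realize E \<rho> i \<noteq> None"
    then have "i \<in> agents E" "realize E \<rho> i = Some (\<rho> i)" using realize_val realize_iff by auto
    then show "i \<in> agents E \<and> valid_report E r i (the (realize E \<rho> i))"
      using assms unfolding valid_all_def by simp
  qed
  show "\<forall>i\<in>agents E. (realize E \<rho> i \<noteq> None) = (\<exists>xs. trading_chain E (realize E \<rho>) i xs)"
    unfolding realize_iff realize_tc by simp
qed

lemma lcc_prefix_sub:
  assumes f: "feasible E r t" and j: "t j \<noteq> None" and y: "y \<in> set (lcc E t j)"
  shows "set (lcc E t y) \<subseteq> set (lcc E t j)"
proof -
  obtain k where k: "k < length (lcc E t j)" "lcc E t j ! k = y" using in_set_conv_nth[THEN iffD1, OF y] by blast
  then have "trading_chain E t y (take k (lcc E t j))" using tc_prefix[OF feas_chain[OF f j]] by metis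
  then have "lcc E t y = take k (lcc E t j)" using feas_lcc[OF f] by blast
  then show ?thesis by (simp add: set_take_subset)
qed

lemma survive:
  assumes f: "feasible E r t" and j: "j \<in> buyers E" "t j \<noteq> None"
    and z: "z \<notin> set (lcc E t j @ [j])"
  shows "SW E t j \<le> Wstar E (without t (dset E t z))"
proof -
  let ?Y = "dset E t z"
  have nY: "y \<notin> ?Y" if y: "y \<in> set (lcc E t j @ [j])" for y
  proof
    assume "y \<in> ?Y"
    then have yz: "z \<in> set (lcc E t y) \<or> z = y" unfolding dset_eq[OF f] by blast
    show False
    proof (cases "y = j")
      case True then show ?thesis using yz z by simp
    next
      case False
      then have "y \<in> set (lcc E t j)" using y by simp
      then have "set (lcc E t y) \<subseteq> set (lcc E t j)" using lcc_prefix_sub[OF f j(2)] by blast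
      then show ?thesis using yz z \<open>y \<in> set (lcc E t j)\<close> by auto
    qed
  qed
  have "\<forall>y\<in>set (lcc E t j). shared (without t ?Y) y = shared t y"
    using nY by (simp add: shared_without)
  then have "trading_chain E (without t ?Y) j (lcc E t j)"
    using tc_cong[of "lcc E t j" "without t ?Y" t E j] feas_chain[OF f j(2)] by simp
  moreover have "without t ?Y j \<noteq> None" "bid_of (without t ?Y) j = bid_of t j"
    using nY[of j] j unfolding without_None bid_without by auto
  ultimately have "bid_of (without t ?Y) j - chain_cost E (lcc E t j) \<le> Wstar E (without t ?Y)"
    using W_ge[OF j(1), of "without t ?Y" "lcc E t j"] by blast
  then show ?thesis unfolding SW_def using \<open>bid_of (without t ?Y) j = bid_of t j\<close> by simp
qed

lemma dset_buyer:
  assumes f: "feasible E r t" and j: "j \<in> buyers E" "t j \<noteq> None"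
  shows "dset E t j = {j}"
proof -
  have "j \<notin> set (lcc E t y)" if "t y \<noteq> None" for y
    using lcc_inter[OF f that] buyer_not_inter[OF j(1)] by blast
  then show ?thesis unfolding dset_eq[OF f] using j(2) by auto
qed

lemma util_buyer_uninf:
  assumes f: "feasible E r t" and i: "i \<in> buyers E" "t i = None" and w: "w \<in> outcomes E t"
  shows "utility E b t w i = 0"
  using outcomes_cases[OF w]
proof
  assume "w = None \<and> winners E t = {}" then show ?thesis using util_None by simp
next
  assume "\<exists>m. w = Some m \<and> m \<in> winners E t"
  then obtain m where wm: "w = Some m" and m: "m \<in> winners E t" by blast
  have "i \<noteq> m" using winnersD(2)[OF m] i by auto
  moreover have "i \<notin> set (lcc E t m)" using lcc_inter[OF f winnersD(2)[OF m]] buyer_not_inter[OF i(1)] by blast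
  ultimately show ?thesis using util_other[OF f m] wm by simp
qed

end

context TM begin
lemma ic_buyer:
  assumes v: "valid_all \<rho>" and i: "i \<in> buyers E" and x: "valid_report E r i x"
    and bpos: "\<forall>i\<in>buyers E. 0 \<le> b i"
  shows "expected_utility E b (realize E (\<rho>(i := x))) i
       \<le> expected_utility E b (realize E (\<rho>(i := truthful E b r i))) i"
proof -
  let ?\<rho>1 = "\<rho>(i := x)" let ?\<rho>0 = "\<rho>(i := truthful E b r i)"
  let ?t1 = "realize E ?\<rho>1" let ?t0 = "realize E ?\<rho>0"
  obtain v0 where xv: "x = Bid v0" using x i unfolding valid_report_def intermediates_def by auto
  have tr: "truthful E b r i = Bid (b i)" using i unfolding truthful_def by simp
  have v1: "valid_all ?\<rho>1" using v x unfolding valid_all_def by auto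
  have v0: "valid_all ?\<rho>0" using v i bpos unfolding valid_all_def tr valid_report_def by auto
  have f1: "feasible E r ?t1" using realize_feasible[OF v1] .
  have f0: "feasible E r ?t0" using realize_feasible[OF v0] .
  have shr: "shared (Some \<circ> ?\<rho>1) = shared (Some \<circ> ?\<rho>0)"
    by (intro ext) (simp add: shared_def xv tr)
  have tcr: "trading_chain E (Some \<circ> ?\<rho>1) = trading_chain E (Some \<circ> ?\<rho>0)"
    using tc_eq_shared[OF shr] .
  have same: "?t1 j = ?t0 j" if "j \<noteq> i" for j
    unfolding realize_def using that tcr by simp
  have infi: "?t1 i \<noteq> None \<longleftrightarrow> ?t0 i \<noteq> None" unfolding realize_iff tcr ..
  have sht: "shared ?t1 = shared ?t0"
  proof (rule ext)
    fix y show "shared ?t1 y = shared ?t0 y"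
    proof (cases "y = i")
      case True
      have "shared ?t1 i = {}" "shared ?t0 i = {}"
        unfolding shared_def realize_def using xv tr by auto
      then show ?thesis using True by simp
    next
      case False then show ?thesis using same by (simp add: shared_def)
    qed
  qed
  have tct: "trading_chain E ?t1 = trading_chain E ?t0" using tc_eq_shared[OF sht] .
  have lcct: "lcc E ?t1 = lcc E ?t0" using lcc_eq_tc[OF tct] .
  have wo: "without ?t1 {i} = without ?t0 {i}" by (intro ext) (simp add: without_def same)
  define t1 where "t1 = ?t1"
  define t0 where "t0 = ?t0"
  have f1: "feasible E r t1" using f1 unfolding t1_def .
  have f0: "feasible E r t0" using f0 unfolding t0_def .
  have infi: "t1 i \<noteq> None \<longleftrightarrow> t0 i \<noteq> None" using infi unfolding t1_def t0_def .
  have wo: "without t1 {i} = without t0 {i}" using wo unfolding t1_def t0_def .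
  have lcct: "lcc E t1 = lcc E t0" using lcct unfolding t1_def t0_def .
  have t0v: "t0 i = Some (Bid (b i))" if "t0 i \<noteq> None"
  proof -
    have "?t0 i = Some (?\<rho>0 i)" using realize_val[of "?\<rho>0" i] that unfolding t0_def by blast
    then show ?thesis unfolding t0_def using tr by simp
  qed
  have goal: "expected_utility E b t1 i \<le> expected_utility E b t0 i"
  proof (cases "t0 i = None")
    case True
    then have "t1 i = None" using infi by simp
    then have "expected_utility E b t1 i = 0"
      unfolding expected_utility_def using util_buyer_uninf[OF f1 i] by simp
    moreover have "expected_utility E b t0 i = 0"
      unfolding expected_utility_def using util_buyer_uninf[OF f0 i] True by simp
    ultimately show ?thesis by simp
  next
    case False
    have inf0: "t0 i \<noteq> None" using False .
    have t0i: "t0 i = Some (Bid (b i))" using t0v[OF False] .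
    define Wm where "Wm = Wstar E (without t0 {i})"
    define S where "S = b i - Wm - chain_cost E (lcc E t0 i)"
    have up: "utility E b t1 w i \<le> max S 0" if w: "w \<in> outcomes E t1" for w
      using outcomes_cases[OF w]
    proof
      assume "w = None \<and> winners E t1 = {}" then show ?thesis using util_None by simp
    next
      assume "\<exists>m. w = Some m \<and> m \<in> winners E t1"
      then obtain m where wm: "w = Some m" and m: "m \<in> winners E t1" by blast
      show ?thesis
      proof (cases "m = i")
        case True
        then have "utility E b t1 w i = b i - Wstar E (without t1 {i}) - chain_cost E (lcc E t1 i)"
          using util_m[OF f1 m, of b] wm by simp
        also have "\<dots> = S" unfolding S_def Wm_def wo lcct ..
        finally have "utility E b t1 w i = S" .
        then show ?thesis by simp
      next
        case False
        have "i \<notin> set (lcc E t1 m)" using lcc_inter[OF f1 winnersD(2)[OF m]] buyer_not_inter[OF i] by blast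
        then show ?thesis using util_other[OF f1 m] False wm by simp
      qed
    qed
    have low: "max S 0 \<le> utility E b t0 w i" if w: "w \<in> outcomes E t0" for w
    proof (cases "S \<le> 0")
      case True
      then show ?thesis using util_buyer_nonneg[OF f0 i, of b, OF t0i w] by simp
    next
      case False
      have bi: "bid_of t0 i = b i" using t0i unfolding bid_of_def by simp
      have Wm0: "0 \<le> Wm" unfolding Wm_def by (rule W_ge0)
      have swi: "SW E t0 i = S + Wm" unfolding SW_def S_def bi by simp
      have only: "m = i" if m: "m \<in> winners E t0" for m
      proof (rule ccontr)
        assume "m \<noteq> i"
        moreover have "i \<notin> set (lcc E t0 m)"
          using lcc_inter[OF f0 winnersD(2)[OF m]] buyer_not_inter[OF i] by blast
        ultimately have "i \<notin> set (lcc E t0 m @ [m])" by simp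
        then have "SW E t0 m \<le> Wstar E (without t0 (dset E t0 i))" by (rule survive[OF f0 winnersD(1,2)[OF m]])
        then have "SW E t0 m \<le> Wm" unfolding Wm_def dset_buyer[OF f0 i inf0] .
        moreover have "SW E t0 i \<le> SW E t0 m" using winnersD(4)[OF m i inf0] .
        ultimately show False using swi False by simp
      qed
      have "winners E t0 \<noteq> {}" using winners_ne[OF f0 i inf0] swi False Wm0 by simp
      then have "winners E t0 = {i}" using only by blast
      then have "w = Some i" using w unfolding outcomes_def by simp
      moreover have "i \<in> winners E t0" using \<open>winners E t0 = {i}\<close> by simp
      ultimately have "utility E b t0 w i = S" using util_m[OF f0, of i b] unfolding S_def Wm_def by simp
      then show ?thesis using False by simp
    qed
    show ?thesis unfolding expected_utility_def
    proof (rule avg_mono[OF outcomes_fin outcomes_fin])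
      fix a c assume "a \<in> outcomes E t1" "c \<in> outcomes E t0"
      then show "utility E b t1 a i \<le> utility E b t0 c i" using up[of a] low[of c] by linarith
    qed
  qed
  then show ?thesis unfolding t1_def t0_def .
qed

end


lemma last_take_nth:
  assumes "0 < l" "l \<le> length xs"
  shows "last (take l xs) = xs ! (l - 1)"
proof -
  have "take l xs = take (l - 1) xs @ [xs ! (l - 1)]"
    using assms take_Suc_conv_app_nth[of "l - 1" xs] by simp
  then show ?thesis by simp
qed

context TM begin

lemma ic_inter:
  assumes v: "valid_all \<rho>" and i: "i \<in> intermediates E" and x: "valid_report E r i x"
  shows "expected_utility E b (realize E (\<rho>(i := x))) i
       \<le> expected_utility E b (realize E (\<rho>(i := truthful E b r i))) i"
proof -
  define \<rho>1 where "\<rho>1 = \<rho>(i := x)"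
  define \<rho>0 where "\<rho>0 = \<rho>(i := truthful E b r i)"
  have ib: "i \<notin> buyers E" using i unfolding intermediates_def by simp
  obtain R where R: "R \<subseteq> r i" "x = Share R" using x ib unfolding valid_report_def by auto
  have tr: "truthful E b r i = Share (r i)" using ib unfolding truthful_def by simp
  have v1: "valid_all \<rho>1" using v x unfolding valid_all_def \<rho>1_def by auto
  have v0: "valid_all \<rho>0" using v i unfolding valid_all_def \<rho>0_def tr valid_report_def by auto
  have r1i: "\<rho>1 i = Share R" "\<rho>0 i = Share (r i)" unfolding \<rho>1_def \<rho>0_def using R tr by auto
  have rne: "\<rho>1 y = \<rho>0 y" if "y \<noteq> i" for y unfolding \<rho>1_def \<rho>0_def using that by simp
  have sh: "shared (Some \<circ> \<rho>1) y \<subseteq> shared (Some \<circ> \<rho>0) y" for y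
  proof (cases "y = i")
    case True then show ?thesis using r1i R by (simp add: shared_def)
  next
    case False then show ?thesis using rne by (simp add: shared_def)
  qed
  have sheq: "shared (Some \<circ> \<rho>1) y = shared (Some \<circ> \<rho>0) y" if "y \<noteq> i" for y
    using rne[OF that] by (simp add: shared_def)
  define t1 where "t1 = realize E \<rho>1"
  define t0 where "t0 = realize E \<rho>0"
  have f1: "feasible E r t1" unfolding t1_def using realize_feasible[OF v1] .
  have f0: "feasible E r t0" unfolding t0_def using realize_feasible[OF v0] .
  have P1: "trading_chain E t0 j xs" if "trading_chain E t1 j xs" for j xs
  proof -
    have "trading_chain E (Some \<circ> \<rho>1) j xs" using that realize_tc unfolding t1_def by blast
    then have "trading_chain E (Some \<circ> \<rho>0) j xs" using tc_mono[of "Some \<circ> \<rho>1" "Some \<circ> \<rho>0"] sh by blast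
    then show ?thesis using realize_tc unfolding t0_def by blast
  qed
  have P2: "t0 j \<noteq> None" if "t1 j \<noteq> None" for j
    using that P1 feas_chain[OF f1] feas_informed[OF f0] by blast
  have P3: "t0 j = t1 j" if "t1 j \<noteq> None" "j \<noteq> i" for j
  proof -
    have "t1 j = Some (\<rho>1 j)" using realize_val that(1) unfolding t1_def by blast
    moreover have "t0 j = Some (\<rho>0 j)" using realize_val P2[OF that(1)] unfolding t0_def by blast
    ultimately show ?thesis using rne[OF that(2)] by simp
  qed
  have P4: "shared t1 y \<subseteq> shared t0 y" for y
  proof (cases "t1 y = None")
    case True then show ?thesis by (simp add: shared_def)
  next
    case False
    have "t1 y = Some (\<rho>1 y)" using realize_val False unfolding t1_def by blast
    moreover have "t0 y = Some (\<rho>0 y)" using realize_val P2[OF False] unfolding t0_def by blast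
    ultimately show ?thesis using sh[of y] by (simp add: shared_def)
  qed
  have P5: "lcc E t1 j = lcc E t0 j" if "t1 j \<noteq> None" for j
    using feas_lcc[OF f0 P1[OF feas_chain[OF f1 that]]] by simp
  have P6: "j \<in> dset E t1 c \<longleftrightarrow> j \<in> dset E t0 c" if "t1 j \<noteq> None" for j c
    unfolding dset_eq[OF f1] dset_eq[OF f0] using that P2[OF that] P5[OF that] by simp
  have P7: "t1 j \<noteq> None" if "t0 j \<noteq> None" "j \<noteq> i" "i \<notin> set (lcc E t0 j)" for j
  proof -
    have "trading_chain E t0 j (lcc E t0 j)" using feas_chain[OF f0 that(1)] .
    then have a: "trading_chain E (Some \<circ> \<rho>0) j (lcc E t0 j)" using realize_tc unfolding t0_def by blast
    have "\<forall>y\<in>set (lcc E t0 j). shared (Some \<circ> \<rho>0) y = shared (Some \<circ> \<rho>1) y"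
      using sheq that(3) by metis
    then have "trading_chain E (Some \<circ> \<rho>1) j (lcc E t0 j)"
      using tc_cong[of "lcc E t0 j" "Some \<circ> \<rho>0" "Some \<circ> \<rho>1" E j] a by simp
    then have "trading_chain E t1 j (lcc E t0 j)" using realize_tc unfolding t1_def by blast
    then show ?thesis using feas_informed[OF f1] by blast
  qed
  have Aeq: "without t1 (dset E t1 i) = without t0 (dset E t0 i)"
  proof (rule ext)
    fix j show "without t1 (dset E t1 i) j = without t0 (dset E t0 i) j"
    proof (cases "t1 j = None")
      case False
      have d: "j \<in> dset E t1 i \<longleftrightarrow> j \<in> dset E t0 i" using P6[OF False] .
      show ?thesis
      proof (cases "j \<in> dset E t1 i")
        case True then show ?thesis using d unfolding without_def by simp
      next
        case nj: False
        have "j \<noteq> i" using nj dset_self[OF f1] False by blast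
        then show ?thesis using d nj P3[OF False] unfolding without_def by simp
      qed
    next
      case True
      show ?thesis
      proof (cases "t0 j = None")
        case True then show ?thesis using \<open>t1 j = None\<close> unfolding without_def by simp
      next
        case False
        have "j \<in> dset E t0 i"
        proof (rule ccontr)
          assume "j \<notin> dset E t0 i"
          then have "j \<noteq> i" "i \<notin> set (lcc E t0 j)" unfolding dset_eq[OF f0] using False by auto
          then show False using P7[OF False] \<open>t1 j = None\<close> by blast
        qed
        then show ?thesis using \<open>t1 j = None\<close> unfolding without_def by simp
      qed
    qed
  qed
  define A where "A = Wstar E (without t0 (dset E t0 i))"
  have Wt: "Wstar E t1 \<le> Wstar E t0"
  proof (rule W_mono)
    fix y show "shared t1 y \<subseteq> shared t0 y" by (rule P4)
  next
    fix j assume j: "j \<in> buyers E" "t1 j \<noteq> None"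
    then have "j \<noteq> i" using ib by blast
    then show "t0 j \<noteq> None \<and> bid_of t1 j = bid_of t0 j" using P2[OF j(2)] P3[OF j(2)] by (simp add: bid_of_def)
  qed
  have main: "utility E b t1 w1 i \<le> utility E b t0 w0 i"
    if w1: "w1 \<in> outcomes E t1" and w0: "w0 \<in> outcomes E t0" for w1 w0
  proof -
    have u0: "0 \<le> utility E b t0 w0 i" using util_inter_nonneg[OF f0 i w0] .
    show ?thesis
      using outcomes_cases[OF w1]
    proof
      assume "w1 = None \<and> winners E t1 = {}" then show ?thesis using util_None u0 by simp
    next
      assume "\<exists>m. w1 = Some m \<and> m \<in> winners E t1"
      then obtain m1 where wm1: "w1 = Some m1" and m1: "m1 \<in> winners E t1" by blast
      have im1: "i \<noteq> m1" using winnersD(1)[OF m1] ib by blast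
      show ?thesis
      proof (cases "i \<in> set (lcc E t1 m1)")
        case False
        then have "i \<notin> set (lcc E t1 m1 @ [m1])" using im1 by simp
        then show ?thesis using util_other[OF f1 m1] wm1 u0 by simp
      next
        case True
        define xs1 where "xs1 = lcc E t1 m1"
        define s1 where "s1 = xs1 @ [m1]"
        obtain k where k: "k < length xs1" "xs1 ! k = i"
          using in_set_conv_nth[THEN iffD1, OF True] unfolding xs1_def by blast
        have s1k: "s1 ! k = i" using k unfolding s1_def by (simp add: nth_append)
        define c' where "c' = s1 ! Suc k"
        define B1 where "B1 = Wstar E (without t1 (dset E t1 c'))"
        have u1: "utility E b t1 w1 i = B1 - A"
          using util_k[OF f1 m1, of k b] k s1k wm1 Aeq
          unfolding B1_def c'_def s1_def xs1_def A_def by simp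
        have B1W: "B1 \<le> Wstar E t0" unfolding B1_def using W_without_le Wt by (meson order_trans)
        show ?thesis
          using outcomes_cases[OF w0]
        proof
          assume "w0 = None \<and> winners E t0 = {}"
          then have "Wstar E t0 = 0" using W_nowinner[OF f0] by blast
          then show ?thesis using u1 B1W W_ge0[of "without t0 (dset E t0 i)"] u0 unfolding A_def by linarith
        next
          assume "\<exists>m. w0 = Some m \<and> m \<in> winners E t0"
          then obtain m0 where wm0: "w0 = Some m0" and m0: "m0 \<in> winners E t0" by blast
          have im0: "i \<noteq> m0" using winnersD(1)[OF m0] ib by blast
          show ?thesis
          proof (cases "i \<in> set (lcc E t0 m0)")
            case False
            then have "i \<notin> set (lcc E t0 m0 @ [m0])" using im0 by simp
            then have "SW E t0 m0 \<le> A" unfolding A_def by (rule survive[OF f0 winnersD(1,2)[OF m0]])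
            then have "Wstar E t0 \<le> A" using W_winner[OF f0 m0] by simp
            then show ?thesis using u1 B1W u0 by linarith
          next
            case True
            define xs0 where "xs0 = lcc E t0 m0"
            define s0 where "s0 = xs0 @ [m0]"
            obtain k0 where k0: "k0 < length xs0" "xs0 ! k0 = i"
              using in_set_conv_nth[THEN iffD1, OF True] unfolding xs0_def by blast
            have s0k: "s0 ! k0 = i" using k0 unfolding s0_def by (simp add: nth_append)
            define c where "c = s0 ! Suc k0"
            define B0 where "B0 = Wstar E (without t0 (dset E t0 c))"
            have u0': "utility E b t0 w0 i = B0 - A"
              using util_k[OF f0 m0, of k0 b] k0 s0k wm0
              unfolding B0_def c_def s0_def xs0_def A_def by simp
            have "B1 \<le> B0"
            proof (cases "c = c'")
              case True
              show ?thesis unfolding B1_def B0_def True[symmetric]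
              proof (rule W_mono)
                fix y
                show "shared (without t1 (dset E t1 c)) y \<subseteq> shared (without t0 (dset E t0 c)) y"
                proof (cases "y \<in> dset E t1 c \<or> t1 y = None")
                  case True
                  then have "shared (without t1 (dset E t1 c)) y = {}"
                    unfolding shared_def without_def by auto
                  then show ?thesis by simp
                next
                  case False
                  then have "y \<notin> dset E t0 c" using P6[of y c] by blast
                  then show ?thesis using False P4[of y] by (simp add: shared_without)
                qed
              next
                fix j assume j: "j \<in> buyers E" "without t1 (dset E t1 c) j \<noteq> None"
                then have j1: "t1 j \<noteq> None" "j \<notin> dset E t1 c" unfolding without_None by auto
                then have "j \<notin> dset E t0 c" using P6 by blast
                moreover have "j \<noteq> i" using j(1) ib by blast
                ultimately show "without t0 (dset E t0 c) j \<noteq> None \<and>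
                    bid_of (without t1 (dset E t1 c)) j = bid_of (without t0 (dset E t0 c)) j"
                  using j1 P2[OF j1(1)] P3[OF j1(1)] unfolding without_None bid_without by (simp add: bid_of_def)
              qed
            next
              case False
              have m1i: "t1 m1 \<noteq> None" using winnersD(2)[OF m1] .
              have cnot: "c \<notin> set s1"
              proof
                assume "c \<in> set s1"
                then obtain l where l: "l < length s1" "s1 ! l = c" using in_set_conv_nth[THEN iffD1] by metis
                have l': "l \<le> length xs1" using l(1) unfolding s1_def by simp
                have lc1: "lcc E t1 c = take l xs1"
                  using lcc_seq[OF f1 m1i, of l] l' l(2) unfolding s1_def xs1_def by simp
                have ci: "t1 c \<noteq> None" using seq_informed[OF f1 m1i, of l] l' l(2) unfolding s1_def xs1_def by simp
                have lc0: "lcc E t0 c = take (Suc k0) xs0"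
                  using lcc_seq[OF f0 winnersD(2)[OF m0], of "Suc k0"] k0(1) unfolding c_def s0_def xs0_def by simp
                have eq: "take l xs1 = take (Suc k0) xs0" using lc1 lc0 P5[OF ci] by simp
                have "last (take (Suc k0) xs0) = i" using last_take_nth[of "Suc k0" xs0] k0 by simp
                moreover have "take (Suc k0) xs0 \<noteq> []" using k0(1) by (cases xs0) auto
                ultimately have "take l xs1 \<noteq> []" "last (take l xs1) = i" using eq by auto
                then have l0: "0 < l" by (cases l) auto
                then have "xs1 ! (l - 1) = i" using last_take_nth[OF l0 l'] \<open>last (take l xs1) = i\<close> by simp
                moreover have "distinct xs1" using lcc_distinct[OF f1 m1i] unfolding xs1_def by simp
                ultimately have "l - 1 = k" using k l0 l' nth_eq_iff_index_eq by (metis Suc_pred' less_Suc_eq_le not_less_eq)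
                then have "l = Suc k" using l0 by simp
                then show False using False l(2) unfolding c'_def by simp
              qed
              have "B1 \<le> Wstar E t1" unfolding B1_def by (rule W_without_le)
              also have "\<dots> = SW E t1 m1" using W_winner[OF f1 m1] .
              also have "\<dots> = SW E t0 m1"
                unfolding SW_def using P3[OF m1i] P5[OF m1i] winnersD(1)[OF m1] ib
                by (metis bid_of_def)
              also have "\<dots> \<le> B0" unfolding B0_def
              proof (rule survive[OF f0 winnersD(1)[OF m1] P2[OF m1i]])
                show "c \<notin> set (lcc E t0 m1 @ [m1])" using cnot P5[OF m1i] unfolding s1_def xs1_def by simp
              qed
              finally show ?thesis .
            qed
            then show ?thesis using u1 u0' by simp
          qed
        qed
      qed
    qed
  qed
  have "expected_utility E b t1 i \<le> expected_utility E b t0 i"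
    unfolding expected_utility_def
  proof (rule avg_mono[OF outcomes_fin outcomes_fin])
    fix a c assume "a \<in> outcomes E t1" "c \<in> outcomes E t0"
    then show "utility E b t1 a i \<le> utility E b t0 c i" by (rule main)
  qed
  then show ?thesis unfolding t1_def t0_def \<rho>1_def \<rho>0_def .
qed

end


theorem proposition1:
  fixes E :: "'a market" and b :: "'a \<Rightarrow> real" and r :: "'a \<Rightarrow> 'a set"
  assumes "finite (agents E)"
    and "seller E \<notin> agents E"
    and "buyers E \<subseteq> agents E"
    and "seller_nbrs E \<subseteq> agents E"
    and "\<forall>i\<in>intermediates E. r i \<subseteq> agents E"
    and "\<forall>i\<in>intermediates E. 0 \<le> cost E i"
    and "\<forall>i\<in>buyers E. 0 \<le> b i"
    and "is_tree (net_vertices E) (net_edges E r)"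
  shows "efficient E r \<and> individually_rational E b r \<and> incentive_compatible E b r \<and>
         weakly_budget_balanced E r \<and>
         (\<forall>t. feasible E r t \<longrightarrow>
              (\<forall>w\<in>outcomes E t. vickrey_revenue E t \<le> revenue E t w))"
proof -
  interpret TM E r
    by (unfold_locales) (use assms in auto)
  have ic: "incentive_compatible E b r"
    unfolding incentive_compatible_def
  proof (intro allI impI ballI)
    fix \<rho> i x
    assume v: "\<forall>j\<in>agents E. valid_report E r j (\<rho> j)" and i: "i \<in> agents E"
      and x: "valid_report E r i x"
    have va: "valid_all \<rho>" using v unfolding valid_all_def .
    show "expected_utility E b (realize E (\<rho>(i := x))) i
          \<le> expected_utility E b (realize E (\<rho>(i := truthful E b r i))) i"
    proof (cases "i \<in> buyers E")
      case True
      then show ?thesis using ic_buyer[OF va True x] assms(7) by blast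
    next
      case False
      then have "i \<in> intermediates E" using i unfolding intermediates_def by blast
      then show ?thesis using ic_inter[OF va _ x] by blast
    qed
  qed
  show ?thesis using efficient ir ic wbb vickrey_part by blast
qed

end
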